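(* Let $m=2t+1\ge5$ and $n=\frac{3^m+1}{4}$. For every integer $\delta$ with $\delta_{2,n}+1\le\delta\le\delta_{1,n}$, the LCD BCH code $\mathcal{C}_{(n,3,\delta,1)}$ has parameters $[n,2m+1,d\ge\delta_{2,n}]$ and $\mathcal{C}_{(n,3,\delta+1,0)}$ has parameters $[n,2m,d\ge2\delta_{2,n}]$.
   Context: Let $q$ be a prime power and $n\ge2$ an integer with $\gcd(n,q)=1$. Let $\ell=\mathrm{ord}_n(q)$, let $\alpha$ be a generator of $\mathbb{F}_{q^\ell}^*$, $\beta=\alpha^{(q^\ell-1)/n}$, and let $m_i(x)$ be the minimal polynomial of $\beta^i$ over $\mathbb{F}_q$. For integers $b\ge0$ and $2\le\delta\le n$, $\mathcal{C}_{(n,q,\delta,b)}$ denotes the cyclic (BCH) code of length $n$ over $\mathbb{F}_q$ with generator polynomial $\mathrm{lcm}(m_b(x),\dots,m_{b+\delta-2}(x))$. A linear code $\mathcal{C}$ is LCD if $\mathcal{C}\cap\mathcal{C}^\perp=\{0\}$ (Euclidean dual). $[n,k,d\ge D]$ means length $n$, dimension $k$, minimum Hamming distance at least $D$. For $0\le s\le n-1$, $C_s=\{sq^i\bmod n:0\le i\le\ell-1\}$ is the $q$-cyclotomic coset of $s$ modulo $n$; its least element is its coset leader; $\mathrm{MinRep}_n$ is the set of coset leaders modulo $n$ (including $0$), and $\delta_{i,n}$ is the $i$-th largest element of $\mathrm{MinRep}_n$ (here with $q=3$). *)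

theory Defs
  imports "Berlekamp_Zassenhaus.Finite_Field" "HOL-Number_Theory.Number_Theory"
begin

datatype three = T0 | T1 | T2

lemma UNIV_three: "(UNIV :: three set) = {T0, T1, T2}"
  using three.exhaust by blast

instance three :: finite
  by standard (simp add: UNIV_three)

lemma card_three: "CARD(three) = 3"
  by (simp add: UNIV_three)

instance three :: prime_card
  by standard (simp add: card_three)

type_synonym F3 = "three mod_ring"

definition emb3 :: "F3 \<Rightarrow> 'k::field" where
  "emb3 x = of_int (to_int_mod_ring x)"

definition cyc_coset :: "nat \<Rightarrow> nat \<Rightarrow> nat \<Rightarrow> nat set" where
  "cyc_coset q n s = {(s * q ^ i) mod n | i. i < ord n q}"

definition MinRep :: "nat \<Rightarrow> nat \<Rightarrow> nat set" where
  "MinRep q n = {s. s < n \<and> s = Min (cyc_coset q n s)}"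

text \<open>delta_idx q i n = the i-th largest element of MinRep q n (i >= 1).\<close>
definition delta_idx :: "nat \<Rightarrow> nat \<Rightarrow> nat \<Rightarrow> nat" where
  "delta_idx q i n = (THE x. x \<in> MinRep q n \<and> card {y \<in> MinRep q n. x < y} = i - 1)"

definition minpoly3 :: "'k::field \<Rightarrow> F3 poly" where
  "minpoly3 \<gamma> = (THE p. monic p \<and> poly (map_poly emb3 p) \<gamma> = 0 \<and>
      (\<forall>r. poly (map_poly emb3 r) \<gamma> = 0 \<longrightarrow> p dvd r))"

definition bch_gen :: "'k::field \<Rightarrow> nat \<Rightarrow> nat \<Rightarrow> F3 poly" where
  "bch_gen \<beta> \<delta> b = Lcm ((\<lambda>i. minpoly3 (\<beta> ^ i)) ` {b .. b + \<delta> - 2})"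

text \<open>Cyclic code of length n generated by g: codewords are polynomials of degree < n
  (identified with vectors in F_3^n) that are multiples of g in F_3[x]/(x^n-1).\<close>
definition cyclic_code :: "nat \<Rightarrow> F3 poly \<Rightarrow> F3 poly set" where
  "cyclic_code n g = {c. degree c < n \<and> (\<exists>a. [c = g * a] (mod ([:-1:] + monom 1 n)))}"

definition bch_code :: "'k::field \<Rightarrow> nat \<Rightarrow> nat \<Rightarrow> nat \<Rightarrow> F3 poly set" where
  "bch_code \<beta> n \<delta> b = cyclic_code n (bch_gen \<beta> \<delta> b)"

definition hweight :: "F3 poly \<Rightarrow> nat" where
  "hweight c = card {i. coeff c i \<noteq> 0}"

definition code_dim :: "F3 poly set \<Rightarrow> nat" where
  "code_dim C = vector_space.dim (smult :: F3 \<Rightarrow> F3 poly \<Rightarrow> F3 poly) C"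

definition min_dist_ge :: "F3 poly set \<Rightarrow> nat \<Rightarrow> bool" where
  "min_dist_ge C D \<longleftrightarrow> (\<forall>c\<in>C. c \<noteq> 0 \<longrightarrow> D \<le> hweight c)"

definition dual_code :: "nat \<Rightarrow> F3 poly set \<Rightarrow> F3 poly set" where
  "dual_code n C = {c. degree c < n \<and> (\<forall>x\<in>C. (\<Sum>i<n. coeff c i * coeff x i) = 0)}"

definition is_LCD :: "nat \<Rightarrow> F3 poly set \<Rightarrow> bool" where
  "is_LCD n C \<longleftrightarrow> C \<inter> dual_code n C = {0}"

end

theory Submission
  imports Defs
begin

definition digs :: "nat \<Rightarrow> (nat \<Rightarrow> int) \<Rightarrow> bool" where
  "digs m e \<longleftrightarrow> (\<forall>i<m. e i \<in> {-1,0,1})"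
definition bval :: "nat \<Rightarrow> (nat \<Rightarrow> int) \<Rightarrow> int" where
  "bval m e = (\<Sum>i<m. e i * 3^i)"
definition brot :: "nat \<Rightarrow> (nat \<Rightarrow> int) \<Rightarrow> nat \<Rightarrow> int" where
  "brot m e = (\<lambda>i. if i = 0 then - e (m-1) else e (i-1))"

lemma bval_Suc: "bval (Suc m) e = bval m e + e m * 3^m"
  by (simp add: bval_def)

lemma bval_bound: "digs m e \<Longrightarrow> 2 * \<bar>bval m e\<bar> \<le> 3^m - 1"
proof (induction m)
  case 0 then show ?case by (simp add: bval_def)
next
  case (Suc m)
  have d: "digs m e" using Suc.prems by (simp add: digs_def)
  have IH: "2 * \<bar>bval m e\<bar> \<le> 3^m - 1" using Suc.IH d .
  have "e m \<in> {-1,0,1}" using Suc.prems by (simp add: digs_def)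
  then have "\<bar>e m * 3^m\<bar> \<le> (3::int)^m" by (auto simp: abs_mult)
  have "\<bar>bval m e + e m * 3^m\<bar> \<le> \<bar>bval m e\<bar> + \<bar>e m * 3^m\<bar>" by (rule abs_triangle_ineq)
  then show ?case using IH \<open>\<bar>e m * 3^m\<bar> \<le> (3::int)^m\<close> by (simp add: bval_Suc)
qed

lemma digs_mono: "digs m e \<Longrightarrow> k \<le> m \<Longrightarrow> digs k e"
  by (simp add: digs_def)

lemma bval_top0: "0 < m \<Longrightarrow> digs m e \<Longrightarrow> e (m-1) = 0 \<Longrightarrow> 2 * \<bar>bval m e\<bar> \<le> 3^(m-1) - 1"
proof -
  assume a: "0 < m" "digs m e" "e (m-1) = 0"
  then obtain k where k: "m = Suc k" by (cases m) auto
  have "bval m e = bval k e" using a k by (simp add: bval_Suc)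
  moreover have "2 * \<bar>bval k e\<bar> \<le> 3^k - 1" using a k by (intro bval_bound) (simp add: digs_def)
  ultimately show ?thesis using k by simp
qed

lemma bval_top_ne0: "0 < m \<Longrightarrow> digs m e \<Longrightarrow> e (m-1) \<noteq> 0 \<Longrightarrow> 2 * \<bar>bval m e\<bar> \<ge> 3^(m-1) + 1"
proof -
  assume a: "0 < m" "digs m e" "e (m-1) \<noteq> 0"
  then obtain k where k: "m = Suc k" by (cases m) auto
  have b: "2 * \<bar>bval k e\<bar> \<le> 3^k - 1" using a k by (intro bval_bound) (simp add: digs_def)
  have "e k \<in> {-1,0,1}" using a(2) k by (simp add: digs_def)
  moreover have "e k \<noteq> 0" using a(3) k by simp
  ultimately have "e k \<in> {-1,1}" by auto
  then show ?thesis using b k by (auto simp: bval_Suc abs_le_iff)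
qed

lemma digs_exists: "2 * \<bar>y\<bar> \<le> 3^m - 1 \<Longrightarrow> \<exists>e. digs m e \<and> bval m e = y"
proof (induction m arbitrary: y)
  case 0 then show ?case by (auto simp: digs_def bval_def)
next
  case (Suc m)
  define t :: int where "t = (if 2*y \<ge> 3^m + 1 then 1 else if 2*y \<le> -(3^m+1) then -1 else 0)"
  have o: "odd ((3::int)^m)" by simp
  have h1: "2*y \<noteq> 3^m" using o by (metis dvd_triv_left)
  have h2: "2*y \<noteq> -(3^m)" using o by (metis dvd_minus_iff dvd_triv_left)
  have "2 * \<bar>y - t * 3^m\<bar> \<le> 3^m - 1" using Suc.prems h1 h2 by (auto simp: t_def split: abs_split)
  then obtain e where e: "digs m e" "bval m e = y - t * 3^m" using Suc.IH by blast
  define e' where "e' = e(m := t)"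
  have "digs (Suc m) e'" using e(1) by (auto simp: digs_def e'_def t_def less_Suc_eq)
  moreover have "bval m e' = bval m e" unfolding bval_def e'_def by (intro sum.cong) auto
  then have "bval (Suc m) e' = y" using e(2) by (simp add: bval_Suc e'_def)
  ultimately show ?case by blast
qed

lemma bval_brot: "0 < m \<Longrightarrow> bval m (brot m e) = 3 * bval m e - e (m-1) * (3^m + 1)"
proof -
  assume "0 < m"
  then obtain k where k: "m = Suc k" by (cases m) auto
  have "bval (Suc k) (brot (Suc k) e) = brot (Suc k) e 0 + (\<Sum>i<k. brot (Suc k) e (Suc i) * 3^(Suc i))"
    unfolding bval_def by (subst sum.lessThan_Suc_shift) simp
  also have "\<dots> = - e k + 3 * (\<Sum>i<k. e i * 3^i)"
    by (simp add: brot_def sum_distrib_left mult.assoc mult.left_commute)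
  also have "\<dots> = 3 * bval (Suc k) e - e k * (3^(Suc k) + 1)"
    by (simp add: bval_Suc algebra_simps bval_def)
  finally show ?thesis using k by simp
qed

lemma digs_brot: "0 < m \<Longrightarrow> digs m e \<Longrightarrow> digs m (brot m e)"
proof -
  assume a: "0 < m" "digs m e"
  have h: "e (m-1) \<in> {-1,0,1}" using a by (simp add: digs_def)
  show ?thesis unfolding digs_def
  proof (intro allI impI)
    fix i assume "i < m"
    show "brot m e i \<in> {-1,0,1}"
    proof (cases "i = 0")
      case True then show ?thesis using h by (auto simp: brot_def)
    next
      case False then show ?thesis using a \<open>i<m\<close> by (simp add: brot_def digs_def)
    qed
  qed
qed

lemma digs_brot_pow: "0 < m \<Longrightarrow> digs m e \<Longrightarrow> digs m ((brot m ^^ k) e)"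
  by (induction k) (auto intro: digs_brot)

lemma brot_pow: "k \<le> m \<Longrightarrow> i < m \<Longrightarrow>
   ((brot m ^^ k) e) i = (if i < k then - e (m - k + i) else e (i - k))"
proof (induction k arbitrary: i)
  case 0 then show ?case by simp
next
  case (Suc k)
  show ?case
  proof (cases "i = 0")
    case True
    then show ?thesis using Suc by (simp add: brot_def)
  next
    case False
    then show ?thesis using Suc by (auto simp: brot_def)
  qed
qed

lemma bval_cong: "(\<forall>i<m. e i = f i) \<Longrightarrow> bval m e = bval m f"
  unfolding bval_def by (intro sum.cong) auto

lemma bval_neg: "bval m (\<lambda>i. - e i) = - bval m e"
  unfolding bval_def by (simp add: sum_negf)

lemma digs_neg: "digs m e \<Longrightarrow> digs m (\<lambda>i. - e i)"
  by (auto simp: digs_def)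

lemma bval_brot_m: "bval m ((brot m ^^ m) e) = - bval m e"
proof -
  have "bval m ((brot m ^^ m) e) = bval m (\<lambda>i. - e i)"
    by (intro bval_cong) (simp add: brot_pow)
  then show ?thesis by (simp add: bval_neg)
qed

lemma bval_brot_pow_add_m: "bval m ((brot m ^^ (m + r)) e) = - bval m ((brot m ^^ r) e)"
  by (simp add: funpow_add bval_brot_m)

lemma bval_brot_pow_mod: "\<bar>bval m ((brot m ^^ r) e)\<bar> = \<bar>bval m ((brot m ^^ (r mod m)) e)\<bar>"
proof (induction r rule: less_induct)
  case (less r)
  show ?case
  proof (cases "r < m \<or> m = 0")
    case True then show ?thesis by auto
  next
    case False
    then obtain r' where r': "r = m + r'" by (metis le_add_diff_inverse not_less)
    have "m > 0" using False r' by (cases m) auto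
    then have "r' < r" using r' by simp
    then show ?thesis using less r' bval_brot_pow_add_m[of m r' e] by (simp add: mod_add_self1)
  qed
qed

lemma bval_brot_pow_cong:
  "0 < m \<Longrightarrow> [bval m ((brot m ^^ k) e) = 3^k * bval m e] (mod (3^m+1))"
proof (induction k)
  case 0 then show ?case by simp
next
  case (Suc k)
  have "[bval m ((brot m ^^ Suc k) e) = 3 * bval m ((brot m ^^ k) e)] (mod (3^m+1))"
    using Suc.prems by (simp add: bval_brot cong_iff_dvd_diff)
  also have "[3 * bval m ((brot m ^^ k) e) = 3 * (3^k * bval m e)] (mod (3^m+1))"
    using Suc by (intro cong_mult) auto
  finally show ?case by (simp add: mult.assoc)
qed

lemma bval_parity: "digs m e \<Longrightarrow> (\<forall>i<m. e i \<noteq> 0) \<Longrightarrow> odd (bval m e) \<longleftrightarrow> odd m"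
proof (induction m)
  case 0 then show ?case by (simp add: bval_def)
next
  case (Suc m)
  have "e m \<in> {-1,1}" using Suc.prems by (auto simp: digs_def)
  then have "odd (e m * 3^m)" by auto
  moreover have "odd (bval m e) \<longleftrightarrow> odd m" using Suc by (auto simp: digs_def)
  ultimately show ?case by (auto simp: bval_Suc)
qed

lemma geom3: "2 * (\<Sum>i<k. (3::int)^i) = 3^k - 1"
  by (induction k) auto

lemma deficit_sum: "2 * L = 3^k - 1 \<Longrightarrow> L - bval k e = (\<Sum>i<k. (1 - e i) * 3^i)"
proof -
  assume "2 * L = 3^k - 1"
  then have "L = (\<Sum>i<k. (3::int)^i)" using geom3[of k] by linarith
  then show ?thesis by (simp add: bval_def sum_subtractf algebra_simps)
qed

lemma deficit_term:
  assumes "digs k e" "2 * L = 3^k - 1" "bval k e \<ge> L - 4" "i < k"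
  shows "(1 - e i) * 3^i \<le> 4"
proof -
  have nn: "\<forall>j\<in>{..<k}. 0 \<le> (1 - e j) * (3::int)^j"
    using assms(1) by (auto simp: digs_def)
  have "(1 - e i) * 3^i \<le> (\<Sum>j<k. (1 - e j) * 3^j)"
    using assms(4) by (intro member_le_sum) (use nn in auto)
  also have "\<dots> = L - bval k e" using deficit_sum[OF assms(2)] by simp
  finally show ?thesis using assms(3) by linarith
qed

lemma deficit_high:
  assumes "digs k e" "2 * L = 3^k - 1" "bval k e \<ge> L - 4" "2 \<le> i" "i < k"
  shows "e i = 1"
proof -
  have t: "(1 - e i) * 3^i \<le> 4" using deficit_term[OF assms(1-3,5)] .
  have "(3::int)^2 \<le> 3^i" by (rule power_increasing) (use assms(4) in auto)
  then have "(9::int) \<le> 3^i" by simp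
  moreover have "e i \<in> {-1,0,1}" using assms(1,5) by (simp add: digs_def)
  ultimately show ?thesis using t by auto
qed

lemma deficit_one:
  assumes "digs k e" "2 * L = 3^k - 1" "bval k e \<ge> L - 4" "1 < k"
  shows "e 1 \<ge> 0"
  using deficit_term[OF assms(1-3), of 1] assms(4) by simp

lemma bval_top0_eq: "0 < m \<Longrightarrow> e (m-1) = 0 \<Longrightarrow> bval m e = bval (m-1) e"
  by (cases m) (auto simp: bval_Suc)

lemma topzero_nz:
  assumes "0 < m" "digs m g" "g (m-1) = 0" "2 * L = 3^(m-1) - 1" "L - 4 \<le> \<bar>bval m g\<bar>"
    "2 \<le> i" "i < m-1"
  shows "g i \<noteq> 0"
proof -
  have dg: "digs (m-1) g" using assms(2) by (rule digs_mono) simp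
  have eq: "bval m g = bval (m-1) g" using assms(1,3) by (rule bval_top0_eq)
  show ?thesis
  proof (cases "bval m g \<ge> 0")
    case True
    then have "bval (m-1) g \<ge> L - 4" using assms(5) eq by linarith
    then show ?thesis using deficit_high[OF dg assms(4) _ assms(6,7)] by simp
  next
    case False
    then have "bval (m-1) (\<lambda>i. - g i) \<ge> L - 4" using assms(5) eq by (simp add: bval_neg)
    then have "- g i = 1" using deficit_high[OF digs_neg[OF dg] assms(4) _ assms(6,7)] by simp
    then show ?thesis by simp
  qed
qed

lemma topzero_full:
  assumes "3 \<le> m" "digs m g" "g (m-1) = 0" "2 * L = 3^(m-1) - 1" "L - 4 \<le> \<bar>bval m g\<bar>"
    "\<forall>i<m-1. g i \<noteq> 0" "4 dvd bval m g" "4 dvd L"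
  shows "\<bar>bval m g\<bar> = L"
proof -
  define h where "h = (if bval m g \<ge> 0 then g else (\<lambda>i. - g i))"
  have dh: "digs m h" using assms(2) by (simp add: h_def digs_neg)
  have dh': "digs (m-1) h" using dh by (rule digs_mono) simp
  have h0: "h (m-1) = 0" using assms(3) by (simp add: h_def)
  have bh: "bval m h = \<bar>bval m g\<bar>" by (simp add: h_def bval_neg)
  have eq: "bval m h = bval (m-1) h" using assms(1) h0 by (intro bval_top0_eq) auto
  have ge: "bval (m-1) h \<ge> L - 4" using bh eq assms(5) by simp
  have nz: "\<forall>i<m-1. h i \<noteq> 0" using assms(6) by (simp add: h_def)
  have hi: "\<forall>i. 1 \<le> i \<longrightarrow> i < m-1 \<longrightarrow> h i = 1"
  proof (intro allI impI)
    fix i assume i: "1 \<le> i" "i < m-1"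
    show "h i = 1"
    proof (cases "i = 1")
      case True
      have "h 1 \<ge> 0" using deficit_one[OF dh' assms(4) ge] assms(1) by simp
      moreover have "h 1 \<in> {-1,0,1}" using dh' i True by (simp add: digs_def)
      ultimately show ?thesis using nz i True by auto
    next
      case False
      then show ?thesis using deficit_high[OF dh' assms(4) ge, of i] i by simp
    qed
  qed
  have "L - bval (m-1) h = (\<Sum>i<m-1. (1 - h i) * 3^i)" by (rule deficit_sum[OF assms(4)])
  also have "\<dots> = (\<Sum>i\<in>{0}. (1 - h i) * 3^i)"
    using assms(1) hi by (intro sum.mono_neutral_right) auto
  also have "\<dots> = 1 - h 0" by simp
  finally have L1: "L - bval (m-1) h = 1 - h 0" .
  have "h 0 \<in> {-1,0,1}" using dh' assms(1) by (simp add: digs_def)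
  then have "h 0 \<in> {-1,1}" using nz assms(1) by auto
  moreover have "4 dvd bval (m-1) h" using assms(7) bh eq by (metis dvd_abs_iff)
  ultimately have "h 0 = 1" using L1 assms(8)
    by (auto, presburger)
  then show ?thesis using L1 bh eq by simp
qed

lemma core:
  assumes m: "odd m" "5 \<le> m" and d: "digs m e" and L: "2 * L = 3^(m-1) - 1" "4 dvd L"
    and H1: "\<forall>r. L - 4 \<le> \<bar>bval m ((brot m ^^ r) e)\<bar>"
    and H2: "\<forall>r. 4 dvd bval m ((brot m ^^ r) e)"
  shows "\<exists>r. \<bar>bval m ((brot m ^^ r) e)\<bar> = L"
proof -
  have m0: "0 < m" using m by simp
  obtain p where p: "p < m" "e p = 0"
  proof (rule ccontr)
    assume "\<not> thesis"
    then have "\<forall>i<m. e i \<noteq> 0" using that by blast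
    then have "odd (bval m e)" using bval_parity[OF d] m by simp
    moreover have "4 dvd bval m e" using H2 spec[OF H2, of 0] by simp
    ultimately show False by (metis dvd_trans even_numeral dvd_refl numeral_Bit0 mult_2 dvd_add_right_iff)
  qed
  define r1 where "r1 = m - 1 - p"
  define f where "f = (brot m ^^ r1) e"
  have df: "digs m f" unfolding f_def using m0 d by (rule digs_brot_pow)
  have f0: "f (m-1) = 0" unfolding f_def r1_def using p m0 by (subst brot_pow) auto
  have nzf: "\<forall>i<m-1. f i \<noteq> 0"
  proof (intro allI impI)
    fix i assume i: "i < m - 1"
    show "f i \<noteq> 0"
    proof (cases "2 \<le> i")
      case True
      show ?thesis using topzero_nz[OF m0 df f0 L(1) _ True i] H1 unfolding f_def by blast
    next
      case False
      show ?thesis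
      proof
        assume fz: "f i = 0"
        define g where "g = (brot m ^^ (m - 1 - i)) f"
        have g_eq: "g = (brot m ^^ (m - 1 - i + r1)) e" unfolding g_def f_def by (simp add: funpow_add)
        have dg: "digs m g" unfolding g_def using m0 df by (rule digs_brot_pow)
        have g0: "g (m-1) = 0" unfolding g_def using fz i by (subst brot_pow) auto
        have idx: "m - (m - 1 - i) + (m - 2 - i) = m - 1" using i m False by arith
        have "g (m-2-i) = - f (m - (m - 1 - i) + (m - 2 - i))" unfolding g_def using i m False
          by (subst brot_pow) auto
        then have g1: "g (m-2-i) = 0" using f0 idx by simp
        have "g (m-2-i) \<noteq> 0"
          using topzero_nz[OF m0 dg g0 L(1), of "m-2-i"] H1 g_eq False m by auto
        then show False using g1 by simp
      qed
    qed
  qed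
  have "\<bar>bval m f\<bar> = L"
    using topzero_full[OF _ df f0 L(1) _ nzf _ L(2)] H1 H2 m unfolding f_def by auto
  then show ?thesis unfolding f_def by blast
qed

lemma rot_strict:
  assumes "0 < m" "digs m e" "e (m-1) = 0" "\<forall>i<m-1. e i \<noteq> 0" "r mod m \<noteq> 0"
  shows "\<bar>bval m e\<bar> < \<bar>bval m ((brot m ^^ r) e)\<bar>"
proof -
  define r' where "r' = r mod m"
  have r': "0 < r'" "r' < m" using assms by (auto simp: r'_def)
  define g where "g = (brot m ^^ r') e"
  have dg: "digs m g" unfolding g_def using assms(1,2) by (rule digs_brot_pow)
  have "g (m-1) = e (m-1-r')" unfolding g_def using r' by (subst brot_pow) auto
  moreover have "e (m-1-r') \<noteq> 0" using assms(4) r' by auto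
  ultimately have "2 * \<bar>bval m g\<bar> \<ge> 3^(m-1) + 1" using bval_top_ne0[OF assms(1) dg] by simp
  moreover have "2 * \<bar>bval m e\<bar> \<le> 3^(m-1) - 1" using bval_top0[OF assms(1-3)] .
  moreover have "\<bar>bval m ((brot m ^^ r) e)\<bar> = \<bar>bval m g\<bar>"
    unfolding g_def r'_def by (rule bval_brot_pow_mod)
  ultimately show ?thesis by linarith
qed

lemma rot_lower:
  assumes "0 < m" "digs m e" "e (m-1) = 0" "\<forall>i<m-1. e i \<noteq> 0"
  shows "\<bar>bval m e\<bar> \<le> \<bar>bval m ((brot m ^^ r) e)\<bar>"
proof (cases "r mod m = 0")
  case True
  then have "\<bar>bval m ((brot m ^^ r) e)\<bar> = \<bar>bval m ((brot m ^^ 0) e)\<bar>"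
    using bval_brot_pow_mod[of m r e] by simp
  then show ?thesis by simp
next
  case False
  then show ?thesis using rot_strict[OF assms False] by simp
qed

lemma bal_unique:
  fixes a b M :: int
  assumes "2 * \<bar>a\<bar> < M" "2 * \<bar>b\<bar> < M" "[a = b] (mod M)"
  shows "a = b"
proof -
  obtain q where q: "a - b = M * q" using assms(3) by (metis cong_iff_dvd_diff dvd_def)
  have "\<bar>a - b\<bar> < M" using assms(1,2) by linarith
  then have "\<bar>M * q\<bar> < M" using q by simp
  have M0: "M > 0" using assms(1) by linarith
  have "q = 0"
  proof (rule ccontr)
    assume "q \<noteq> 0"
    then have "1 \<le> \<bar>q\<bar>" by linarith
    then have "M * 1 \<le> M * \<bar>q\<bar>" using M0 by (intro mult_left_mono) auto
    then show False using \<open>\<bar>M * q\<bar> < M\<close> M0 by (simp add: abs_mult)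
  qed
  then show ?thesis using q by simp
qed

lemma link:
  fixes n s r :: nat and e :: "nat \<Rightarrow> int"
  assumes n: "4 * n = 3^m + 1" and m: "0 < m" and d: "digs m e"
    and c: "[bval m e = 4 * int s] (mod (3^m + 1))"
  shows "4 * int (min (s * 3^r mod n) (n - s * 3^r mod n)) = \<bar>bval m ((brot m ^^ r) e)\<bar>"
proof -
  define w where "w = s * 3^r mod n"
  define y where "y = bval m ((brot m ^^ r) e)"
  define M :: int where "M = 3^m + 1"
  have M: "M = 4 * int n" using arg_cong[OF n, of int] unfolding M_def by simp
  have n0: "n > 0" using n by auto
  have w: "w < n" unfolding w_def using n0 by simp
  have dy: "digs m ((brot m ^^ r) e)" using m d by (rule digs_brot_pow)
  have yb: "2 * \<bar>y\<bar> \<le> M - 2" using bval_bound[OF dy] unfolding y_def M_def by simp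
  have c1: "[y = 3^r * bval m e] (mod M)" unfolding y_def M_def using m by (rule bval_brot_pow_cong)
  have c2: "[3^r * bval m e = 3^r * (4 * int s)] (mod M)" using c unfolding M_def by (intro cong_mult) auto
  have "int w = int (s * 3^r) mod int n" unfolding w_def by (simp add: of_nat_mod)
  then have h4: "4 * int w = (4 * int (s*3^r)) mod (4 * int n)" by (simp only: mod_mult_mult1)
  have "[4 * int w = 4 * int (s*3^r)] (mod (4 * int n))" unfolding cong_def h4 by (rule mod_mod_trivial)
  moreover have "4 * int (s*3^r) = 3^r * (4 * int s)" by simp
  ultimately have c3: "[4 * int w = 3^r * (4 * int s)] (mod M)" unfolding M by (simp only:)
  have cy: "[y = 4 * int w] (mod M)" using c1 c2 c3 by (meson cong_sym cong_trans)
  then obtain q where q: "y - 4 * int w = M * q" by (metis cong_iff_dvd_diff dvd_def)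
  have wl: "4 * int w < M" using w M by simp
  have q01: "q = 0 \<or> q = -1"
  proof -
    have M0: "M \<ge> 0" using M by simp
    have "M * q < M * 1" using q yb wl by linarith
    then have "q < 1" using M0 by (rule mult_left_less_imp_less)
    moreover have "M * (-2) < M * q" using q yb wl by linarith
    then have "-2 < q" using M0 by (rule mult_left_less_imp_less)
    ultimately show ?thesis by linarith
  qed
  show ?thesis
  proof (cases "q = 0")
    case True
    then have "y = 4 * int w" using q by simp
    then have "2 * w \<le> n" using yb M by linarith
    then have "min w (n - w) = w" by simp
    then show ?thesis using \<open>y = 4 * int w\<close> unfolding w_def y_def by simp
  next
    case False
    then have "y = 4 * int w - M" using q q01 by simp
    then have "n \<le> 2 * w" using yb M w by linarith
    then have "min w (n - w) = n - w" by simp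
    then show ?thesis using \<open>y = 4 * int w - M\<close> M w unfolding w_def y_def by (simp add: of_nat_diff)
  qed
qed

lemma pow9_mod4: "(9::nat)^t mod 4 = 1"
proof -
  have "(9::nat)^t mod 4 = (9 mod 4)^t mod 4" by (rule power_mod[symmetric])
  then show ?thesis by simp
qed

lemma pow9_mod8: "(9::nat)^t mod 8 = 1"
proof -
  have "(9::nat)^t mod 8 = (9 mod 8)^t mod 8" by (rule power_mod[symmetric])
  then show ?thesis by simp
qed

locale tern =
  fixes m n :: nat
  assumes m_odd: "odd m" and m5: "5 \<le> m" and n_def: "n = (3^m + 1) div 4"
begin

definition t where "t = m div 2"
lemma m_t: "m = 2 * t + 1" using m_odd unfolding t_def by presburger

lemma pow_m: "(3::nat)^m = 3 * 9^t"
proof -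
  have "(3::nat)^m = 3^(2*t+1)" using m_t by (rule arg_cong)
  also have "\<dots> = 3^(2*t) * 3" by (simp only: power_add power_one_right)
  also have "\<dots> = 3 * 9^t" by (simp add: power_mult)
  finally show ?thesis .
qed
lemma pow_m1: "(3::nat)^(m-1) = 9^t"
proof -
  have "m - 1 = 2 * t" using m_t by simp
  then show ?thesis by (simp add: power_mult)
qed

lemma four_n: "4 * n = 3^m + 1"
proof -
  have "(3 * 9^t + 1) mod (4::nat) = (3 * (9^t mod 4) + 1) mod 4" by (metis mod_add_left_eq mod_mult_right_eq)
  then have "(3^m + 1) mod (4::nat) = 0" using pow9_mod4 pow_m by simp
  then show ?thesis unfolding n_def by (metis add.right_neutral div_mult_mod_eq mult.commute)
qed

lemma n_odd: "odd n"
proof -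
  have "(3 * 9^t + 1) mod (8::nat) = (3 * (9^t mod 8) + 1) mod 8" by (metis mod_add_left_eq mod_mult_right_eq)
  then have "(3^m + 1) mod (8::nat) = 4" using pow9_mod8 pow_m by simp
  then have "(4 * n) mod 8 = 4" using four_n by simp
  then show ?thesis by presburger
qed

definition d1 :: nat where "d1 = (3^(m-1) - 1) div 8"

lemma d1_eq: "8 * d1 = 3^(m-1) - 1"
proof -
  have "(3^(m-1) - 1) mod (8::nat) = 0"
  proof -
    have "(9::nat)^t mod 8 = 1 mod 8" using pow9_mod8[of t] by simp
    moreover have "1 \<le> (9::nat)^t" by simp
    ultimately have "8 dvd (9::nat)^t - 1" using mod_eq_dvd_iff_nat by blast
    then show ?thesis using pow_m1 by simp
  qed
  then show ?thesis unfolding d1_def by (metis add.right_neutral div_mult_mod_eq mult.commute)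
qed


lemma p81: "(81::nat) \<le> 3^(m-1)"
proof -
  have "(3::nat)^4 \<le> 3^(m-1)" by (rule power_increasing) (use m5 in auto)
  then show ?thesis by simp
qed

lemma pm1: "(3::nat)^m = 3 * 3^(m-1)"
proof -
  obtain k where "m = Suc k" using m5 by (cases m) auto
  then show ?thesis by simp
qed

lemma pm2: "(3::nat)^(m-1) = 3 * 3^(m-2)"
proof -
  obtain k where "m = Suc (Suc k)" using m5 by (cases m; cases "m - 1") auto
  then show ?thesis by simp
qed

lemma n_d1: "n = 6 * d1 + 1"
  using four_n d1_eq pm1 p81 by linarith

lemma d1_ge: "10 \<le> d1" using d1_eq p81 by linarith

lemma coprime3: "coprime n 3"
proof -
  have "\<not> 3 dvd n" using n_d1 by presburger
  then have "coprime 3 n" by (intro prime_imp_coprime) auto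
  then show ?thesis by (simp add: coprime_commute)
qed

lemma mod_bounds: "q * n \<le> x \<Longrightarrow> x < (q + 1) * n \<Longrightarrow> x mod n = x - q * n"
  for q x :: nat
proof -
  assume a: "q * n \<le> x" "x < (q + 1) * n"
  have "x = (x - q*n) + q*n" using a by simp
  moreover have "x - q*n < n" using a by (simp add: algebra_simps)
  ultimately show ?thesis by (metis mod_less mod_mult_self1)
qed

lemma pow2m: "[3^(2*m) = 1] (mod n)"
proof -
  have "int (3^m) = 4 * int n - 1" using four_n by linarith
  then have "[int 3^m = -1] (mod int n)" by (simp add: cong_iff_dvd_diff)
  then have "[(int 3^m)^2 = (-1)^2] (mod int n)" by (rule cong_pow)
  then have "[int (3^(2*m)) = int 1] (mod int n)" by (simp add: power_mult[symmetric] mult.commute)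
  then show ?thesis by (simp only: cong_int_iff)
qed

lemma ord3: "ord n 3 = 2 * m"
proof -
  have dv: "ord n 3 dvd 2 * m" using pow2m ord_divides by blast
  have pos: "ord n 3 > 0" using coprime3 coprime_ord by blast
  have o1: "[3 ^ ord n 3 = 1] (mod n)" by (rule ord)
  show ?thesis
  proof (rule ccontr)
    assume ne: "ord n 3 \<noteq> 2 * m"
    define d where "d = ord n 3"
    obtain k where k: "2 * m = d * k" using dv unfolding d_def by blast
    have "k \<noteq> 0" using k m5 by (cases "k = 0") auto
    moreover have "k \<noteq> 1" using k ne unfolding d_def by auto
    ultimately have "2 \<le> k" by arith
    then have "d * 2 \<le> d * k" by simp
    then have dm: "d \<le> m" using k by linarith
    have n2: "n > 2" using n_d1 d1_ge by simp
    have c: "3^d mod n = 1" using o1 n2 unfolding d_def cong_def by simp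
    consider "d \<le> m - 2" | "d = m - 1" | "d = m" using dm by arith
    then show False
    proof cases
      case 1
      have "(3::nat)^d \<le> 3^(m-2)" by (rule power_increasing) (use 1 in auto)
      moreover note pm2
      ultimately have "3^d < n" using four_n pm1 by linarith
      then have "3^d = (1::nat)" using c by simp
      then show False using pos unfolding d_def by simp
    next
      case 2
      have "3^(m-1) mod n = 3^(m-1) - 1 * n"
        by (rule mod_bounds) (use four_n pm1 p81 in \<open>simp; linarith\<close>)+
      then have "3^d mod n = 3^(m-1) - 1 * n" using 2 by simp
      then show False using c four_n pm1 p81 by linarith
    next
      case 3
      have "3^m mod n = 3^m - 3 * n"
        by (rule mod_bounds) (use four_n n2 in \<open>simp; linarith\<close>)+
      then have "3^d mod n = 3^m - 3 * n" using 3 by simp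
      then show False using c four_n n2 by linarith
    qed
  qed
qed


abbreviation C where "C s \<equiv> cyc_coset 3 n s"

lemma n_pos: "0 < n" using n_d1 by simp

lemma pow_red: "3^r mod n = 3^(r mod (2*m)) mod n"
proof -
  have e1: "2*m*(r div (2*m)) + r mod (2*m) = r" by (rule mult_div_mod_eq)
  have "(3::nat)^r = 3^(2*m*(r div (2*m))) * 3^(r mod (2*m))" by (simp only: power_add[symmetric] e1)
  also have "\<dots> = (3^(2*m))^(r div (2*m)) * 3^(r mod (2*m))" by (simp only: power_mult)
  finally have "(3::nat)^r = (3^(2*m))^(r div (2*m)) * 3^(r mod (2*m))" .
  moreover have "[(3^(2*m))^(r div (2*m)) = (1::nat)^(r div (2*m))] (mod n)"
    using pow2m by (rule cong_pow)
  then have "[(3^(2*m))^(r div (2*m)) * 3^(r mod (2*m)) = (1::nat)^(r div (2*m)) * 3^(r mod (2*m))] (mod n)"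
    by (rule cong_scalar_right)
  ultimately have "[(3::nat)^r = 1 * 3^(r mod (2*m))] (mod n)"
    by simp
  then show ?thesis by (simp add: cong_def)
qed

lemma coset_range: "C s = range (\<lambda>r. s * 3^r mod n)"
proof
  show "C s \<subseteq> range (\<lambda>r. s * 3^r mod n)" unfolding cyc_coset_def by auto
next
  show "range (\<lambda>r. s * 3^r mod n) \<subseteq> C s"
  proof
    fix x assume "x \<in> range (\<lambda>r. s * 3^r mod n)"
    then obtain r where r: "x = s * 3^r mod n" by auto
    have "s * 3^r mod n = s * (3^r mod n) mod n" by (simp add: mod_mult_right_eq)
    also have "\<dots> = s * (3^(r mod (2*m)) mod n) mod n" by (simp only: pow_red[of r])
    also have "\<dots> = s * 3^(r mod (2*m)) mod n" by (simp add: mod_mult_right_eq)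
    finally have "x = s * 3^(r mod (2*m)) mod n" using r by simp
    moreover have "r mod (2*m) < ord n 3" using ord3 m5 by simp
    ultimately show "x \<in> C s" unfolding cyc_coset_def by blast
  qed
qed

lemma coset_any: "s * 3^r mod n \<in> C s" by (simp add: coset_range)

lemma coset_lt: "x \<in> C s \<Longrightarrow> x < n" using n_pos by (auto simp: coset_range)

lemma coset_finite: "finite (C s)"
  by (rule finite_subset[of _ "{..<n}"]) (auto dest: coset_lt)

lemma coset_self: "s < n \<Longrightarrow> s \<in> C s" using coset_any[of s 0] by simp

lemma coset_mul: "x \<in> C s \<Longrightarrow> x * 3^j mod n \<in> C s"
proof -
  assume "x \<in> C s"
  then obtain r where r: "x = s * 3^r mod n" by (auto simp: coset_range)
  have "x * 3^j mod n = s * 3^(r+j) mod n" unfolding r by (simp add: mod_mult_left_eq power_add mult.assoc)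
  then show ?thesis by (simp add: coset_any)
qed

lemma coset_sub: "x \<in> C s \<Longrightarrow> C x \<subseteq> C s"
  by (auto simp: coset_range[of x] intro: coset_mul)

lemma coset_sym: "x \<in> C s \<Longrightarrow> s mod n \<in> C x"
proof -
  assume "x \<in> C s"
  then obtain r where r: "x = s * 3^r mod n" by (auto simp: coset_range)
  define j where "j = 2*m - r mod (2*m)"
  have e1: "2*m*(r div (2*m)) + r mod (2*m) = r" by (rule mult_div_mod_eq)
  have "r mod (2*m) < 2*m" using m5 by simp
  then have "r + j = 2*m*(r div (2*m) + 1)" unfolding j_def using e1 by (simp add: algebra_simps)
  then have "(r + j) mod (2*m) = 0" by simp
  then have "3^(r+j) mod n = 1 mod n" using pow_red[of "r+j"] by (simp del: pow_red)
  have "x * 3^j mod n = s * 3^(r+j) mod n" unfolding r by (simp add: mod_mult_left_eq power_add mult.assoc)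
  also have "\<dots> = s * (3^(r+j) mod n) mod n" by (simp add: mod_mult_right_eq)
  also have "\<dots> = s mod n" using \<open>3^(r+j) mod n = 1 mod n\<close> by (simp add: mod_mult_right_eq)
  finally show ?thesis using coset_any[of x j] by simp
qed

lemma coset_eq: "s < n \<Longrightarrow> x \<in> C s \<Longrightarrow> C x = C s"
  using coset_sub coset_sym[of x s] coset_sub[of s x] by auto

lemma mul3m: "0 < x mod n \<Longrightarrow> x * 3^m mod n = n - x mod n"
proof -
  assume a: "0 < x mod n"
  have "int (3^m) = 4 * int n - 1" using four_n by linarith
  then have "int (x * 3^m) = int x * (4 * int n - 1)" by (simp only: of_nat_mult)
  also have "\<dots> = - int x + (4 * int x) * int n" by (simp add: algebra_simps)
  finally have "int (x * 3^m) = - int x + (4 * int x) * int n" .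
  then have "int (x * 3^m) mod int n = (- int x) mod int n"
    by (simp only: mod_mult_self1)
  also have "\<dots> = int n - int x mod int n" using a
    by (simp add: zmod_zminus1_eq_if of_nat_mod[symmetric])
  moreover have "int (n - x mod n) = int n - int x mod int n"
    using n_pos by (simp add: of_nat_diff of_nat_mod[symmetric] less_imp_le)
  ultimately have "int (x * 3^m mod n) = int (n - x mod n)"
    by (simp add: of_nat_mod)
  then show ?thesis by simp
qed

lemma coset_nz: "0 < s \<Longrightarrow> s < n \<Longrightarrow> x \<in> C s \<Longrightarrow> 0 < x"
proof -
  assume a: "0 < s" "s < n" "x \<in> C s"
  then obtain r where r: "x = s * 3^r mod n" by (auto simp: coset_range)
  show ?thesis
  proof (rule ccontr)
    assume "\<not> 0 < x"
    then have "n dvd s * 3^r" using r by auto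
    moreover have "coprime n (3^r)" using coprime3 by simp
    ultimately have "n dvd s" using coprime_dvd_mult_left_iff by blast
    then show False using a by auto
  qed
qed

lemma coset_neg: "0 < s \<Longrightarrow> s < n \<Longrightarrow> x \<in> C s \<Longrightarrow> n - x \<in> C s"
proof -
  assume a: "0 < s" "s < n" "x \<in> C s"
  have x: "0 < x" "x < n" using coset_nz[OF a] coset_lt[OF a(3)] by auto
  have "x * 3^m mod n = n - x" using mul3m[of x] x by simp
  then show ?thesis using coset_mul[OF a(3), of m] by simp
qed


lemma d1_lt: "d1 < n" using n_d1 by simp

lemma L_eq: "2 * int (4 * d1) = 3^(m-1) - 1"
proof -
  have "int (8 * d1) = int (3^(m-1) - 1)" using d1_eq by simp
  moreover have "(1::nat) \<le> 3^(m-1)" by simp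
  ultimately show ?thesis by (simp add: of_nat_diff)
qed

definition Avec :: "nat \<Rightarrow> int" where "Avec i = (if i < m - 1 then 1 else 0)"
definition Bvec :: "nat \<Rightarrow> int" where "Bvec i = (if i < 2 then -1 else if i < m - 1 then 1 else 0)"

lemma Avec: "digs m Avec" "Avec (m-1) = 0" "\<forall>i<m-1. Avec i \<noteq> 0" "bval m Avec = int (4 * d1)"
proof -
  show "digs m Avec" "Avec (m-1) = 0" "\<forall>i<m-1. Avec i \<noteq> 0" by (auto simp: digs_def Avec_def)
  have "bval m Avec = bval (m-1) Avec" using m5 by (intro bval_top0_eq) (auto simp: Avec_def)
  also have "\<dots> = (\<Sum>i<m-1. 3^i)" unfolding bval_def by (intro sum.cong) (auto simp: Avec_def)
  finally have "2 * bval m Avec = 3^(m-1) - 1" using geom3[of "m-1"] by simp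
  then show "bval m Avec = int (4 * d1)" using L_eq by linarith
qed

lemma Bvec: "digs m Bvec" "Bvec (m-1) = 0" "\<forall>i<m-1. Bvec i \<noteq> 0" "bval m Bvec = int (4 * (d1 - 2))"
proof -
  show "digs m Bvec" "Bvec (m-1) = 0" "\<forall>i<m-1. Bvec i \<noteq> 0" using m5 by (auto simp: digs_def Bvec_def)
  have "bval m Avec - bval m Bvec = (\<Sum>i<m. (Avec i - Bvec i) * 3^i)"
    unfolding bval_def by (simp add: sum_subtractf algebra_simps)
  also have "\<dots> = (\<Sum>i<2. (Avec i - Bvec i) * 3^i)"
    using m5 by (intro sum.mono_neutral_right) (auto simp: Avec_def Bvec_def)
  also have "\<dots> = 8" using m5 by (simp add: Avec_def Bvec_def numeral_2_eq_2)
  finally show "bval m Bvec = int (4 * (d1 - 2))" using Avec(4) d1_ge by simp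
qed

lemma key_link:
  assumes "digs m e" "[bval m e = 4 * int s] (mod (3^m + 1))"
  shows "4 * int (min (s * 3^r mod n) (n - s * 3^r mod n)) = \<bar>bval m ((brot m ^^ r) e)\<bar>"
  using link[OF four_n _ assms(1,2)] m5 by simp

lemma lower_coset:
  assumes "digs m e" "e (m-1) = 0" "\<forall>i<m-1. e i \<noteq> 0" "bval m e = int (4 * s)" "x \<in> C s"
  shows "s \<le> x"
proof -
  obtain r where r: "x = s * 3^r mod n" using assms(5) by (auto simp: coset_range)
  have "4 * int (min x (n - x)) = \<bar>bval m ((brot m ^^ r) e)\<bar>"
    unfolding r by (rule key_link[OF assms(1)]) (use assms(4) in simp)
  moreover have "\<bar>bval m e\<bar> \<le> \<bar>bval m ((brot m ^^ r) e)\<bar>"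
    using m5 by (intro rot_lower[OF _ assms(1-3)]) simp
  ultimately have "4 * int s \<le> 4 * int (min x (n - x))" using assms(4) by simp
  then show ?thesis by simp
qed

lemma T2: "x \<in> C d1 \<Longrightarrow> d1 \<le> x"
  using lower_coset[OF Avec] by blast

lemma T3: "x \<in> C (d1 - 2) \<Longrightarrow> d1 - 2 \<le> x"
  using lower_coset[OF Bvec] by blast

lemma T1:
  assumes s: "0 < s" "s < n" and H: "\<forall>x\<in>C s. d1 - 1 \<le> x"
  shows "d1 \<in> C s"
proof -
  define y0 :: int where "y0 = (if 2 * s < n then 4 * int s else 4 * int s - 4 * int n)"
  have "2 * \<bar>y0\<bar> \<le> 3^m - 1"
  proof (cases "2 * s < n")
    case True
    then have "2 * s \<le> n - 1" by simp
    then have "8 * s + 3 \<le> 3^m" using four_n by linarith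
    then have "int (8 * s + 3) \<le> int (3^m)" by (simp only: of_nat_le_iff)
    then show ?thesis using True unfolding y0_def by simp
  next
    case False
    then have "n + 1 \<le> 2 * s" using n_odd by presburger
    then have "8 * n + 3 \<le> 3^m + 8 * s" using four_n by linarith
    then have "int (8 * n + 3) \<le> int (3^m + 8 * s)" by (simp only: of_nat_le_iff)
    then show ?thesis using False s unfolding y0_def by simp
  qed
  then obtain e where e: "digs m e" "bval m e = y0" using digs_exists by blast
  have ce: "[bval m e = 4 * int s] (mod (3^m + 1))"
  proof -
    have h: "4 * int n = 3^m + 1" using arg_cong[OF four_n, of int] by simp
    show ?thesis
    proof (cases "2 * s < n")
      case True then show ?thesis unfolding e(2) y0_def by simp
    next
      case False
      have "4 * int s - 4 * int n - 4 * int s = (3^m + 1) * (-1)" using h by simp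
      then show ?thesis using False unfolding e(2) y0_def cong_iff_dvd_diff
        by (metis dvd_triv_left)
    qed
  qed
  have kl: "\<And>r. 4 * int (min (s * 3^r mod n) (n - s * 3^r mod n)) = \<bar>bval m ((brot m ^^ r) e)\<bar>"
    using key_link[OF e(1) ce] .
  have H1: "\<forall>r. int (4 * d1) - 4 \<le> \<bar>bval m ((brot m ^^ r) e)\<bar>"
  proof
    fix r
    define x where "x = s * 3^r mod n"
    have x: "x \<in> C s" unfolding x_def by (rule coset_any)
    have "n - x \<in> C s" using coset_neg[OF s x] .
    then have "d1 - 1 \<le> min x (n - x)" using H x by simp
    then have "int (d1 - 1) \<le> int (min x (n - x))" by (simp only: of_nat_le_iff)
    moreover have "int (d1 - 1) = int d1 - 1" using d1_ge by simp
    ultimately have "int (4 * d1) - 4 \<le> 4 * int (min x (n - x))" by linarith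
    then show "int (4 * d1) - 4 \<le> \<bar>bval m ((brot m ^^ r) e)\<bar>" using kl[of r] unfolding x_def by simp
  qed
  have H2: "\<forall>r. 4 dvd bval m ((brot m ^^ r) e)"
  proof
    fix r
    have "4 dvd \<bar>bval m ((brot m ^^ r) e)\<bar>" using kl[of r, symmetric] by simp
    then show "4 dvd bval m ((brot m ^^ r) e)" by simp
  qed
  obtain r where r: "\<bar>bval m ((brot m ^^ r) e)\<bar> = int (4 * d1)"
    using core[OF m_odd m5 e(1) L_eq _ H1 H2] by auto
  define x where "x = s * 3^r mod n"
  have x: "x \<in> C s" unfolding x_def by (rule coset_any)
  have "min x (n - x) = d1" using kl[of r] r unfolding x_def by simp
  then have "d1 = x \<or> d1 = n - x" by linarith
  then show ?thesis using x coset_neg[OF s x] by auto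
qed

lemma T4: "card (C d1) = 2 * m"
proof -
  have Ceq: "C d1 = (\<lambda>i. d1 * 3^i mod n) ` {..<2*m}"
    unfolding cyc_coset_def ord3 by auto
  have "inj_on (\<lambda>i. d1 * 3^i mod n) {..<2*m}"
  proof (rule ccontr)
    assume "\<not> ?thesis"
    then obtain i j where ij: "i < j" "j < 2*m" "d1 * 3^i mod n = d1 * 3^j mod n"
      unfolding inj_on_def by (metis lessThan_iff nat_neq_iff)
    define k where "k = j - i"
    have k: "0 < k" "k < 2*m" using ij unfolding k_def by auto
    have e: "d1 * 3^k * 3^i = d1 * 3^j" unfolding k_def using ij
      by (simp add: mult.assoc power_add[symmetric])
    have "[d1 * 3^k * 3^i = d1 * 1 * 3^i] (mod n)"
      unfolding cong_def e using ij(3) by simp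
    moreover have "coprime (3^i) n" using coprime3 by (simp add: coprime_commute)
    ultimately have "[d1 * 3^k = d1 * 1] (mod n)"
      using cong_mult_rcancel_nat by blast
    then have dk: "d1 * 3^k mod n = d1" using d1_lt by (simp add: cong_def)
    have "4 * int (min (d1 * 3^k mod n) (n - d1 * 3^k mod n)) = \<bar>bval m ((brot m ^^ k) Avec)\<bar>"
      by (rule key_link[OF Avec(1)]) (simp add: Avec(4))
    moreover have "min d1 (n - d1) = d1" using n_d1 by simp
    ultimately have "4 * int d1 = \<bar>bval m ((brot m ^^ k) Avec)\<bar>" using dk by simp
    then have eqA: "\<bar>bval m ((brot m ^^ k) Avec)\<bar> = \<bar>bval m Avec\<bar>" unfolding Avec(4) by simp
    have "k mod m = 0"
    proof (rule ccontr)
      assume "k mod m \<noteq> 0"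
      have "\<bar>bval m Avec\<bar> < \<bar>bval m ((brot m ^^ k) Avec)\<bar>"
        by (rule rot_strict[OF _ Avec(1-3)]) (use m5 \<open>k mod m \<noteq> 0\<close> in auto)
      then show False using eqA by linarith
    qed
    then obtain q where q: "k = m * q" by blast
    have "q \<noteq> 0" using q k by (cases "q = 0") auto
    moreover have "\<not> 2 \<le> q"
    proof
      assume "2 \<le> q"
      then have "m * 2 \<le> m * q" by simp
      then show False using q k by linarith
    qed
    ultimately have "q = 1" by arith
    then have "k = m" using q by simp
    moreover have "d1 * 3^m mod n = n - d1 mod n" using d1_ge d1_lt by (intro mul3m) simp
    ultimately show False using dk d1_lt n_d1 by simp
  qed
  then show ?thesis unfolding Ceq by (simp add: card_image)
qed


lemma Min_C: "s < n \<Longrightarrow> (\<forall>x\<in>C s. s \<le> x) \<Longrightarrow> Min (C s) = s"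
  by (intro Min_eqI coset_finite) (auto intro: coset_self)

lemma d1_MinRep: "d1 \<in> MinRep 3 n"
  unfolding MinRep_def using Min_C[of d1] d1_lt T2 by auto

lemma d12_MinRep: "d1 - 2 \<in> MinRep 3 n"
  unfolding MinRep_def using Min_C[of "d1 - 2"] d1_lt T3 by auto

lemma small_elem:
  assumes "0 < x" "x < n" "x \<notin> C d1"
  shows "\<exists>y\<in>C x. 0 < y \<and> y \<le> d1 - 2"
proof (rule ccontr)
  assume "\<not> ?thesis"
  then have "\<forall>y\<in>C x. d1 - 1 \<le> y" using coset_nz[OF assms(1,2)] by force
  then have "d1 \<in> C x" using T1[OF assms(1,2)] by blast
  then have "C d1 = C x" using coset_eq[OF assms(2)] by blast
  then show False using assms coset_self[of x] by simp
qed

lemma MR1: "x \<in> MinRep 3 n \<Longrightarrow> x \<noteq> d1 \<Longrightarrow> x \<le> d1 - 2"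
proof -
  assume a: "x \<in> MinRep 3 n" "x \<noteq> d1"
  have x: "x < n" "x = Min (C x)" using a(1) unfolding MinRep_def by auto
  show ?thesis
  proof (cases "x = 0")
    case True then show ?thesis by simp
  next
    case False
    show ?thesis
    proof (cases "x \<in> C d1")
      case True
      then have "d1 \<le> x" by (rule T2)
      moreover have "C x = C d1" using coset_eq[OF d1_lt True] .
      then have "Min (C x) \<le> d1" using coset_finite coset_self[OF d1_lt] by (simp add: Min_le)
      ultimately show ?thesis using x a(2) by simp
    next
      case nC: False
      obtain y where y: "y \<in> C x" "y \<le> d1 - 2" using small_elem[OF _ x(1) nC] False by auto
      have "Min (C x) \<le> y" using y(1) coset_finite by (simp add: Min_le)
      then show ?thesis using x y by simp
    qed
  qed
qed

lemma MinRep_finite: "finite (MinRep 3 n)"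
  by (rule finite_subset[of _ "{..<n}"]) (auto simp: MinRep_def)

lemma delta1: "delta_idx 3 1 n = d1"
  unfolding delta_idx_def
proof (rule the_equality)
  have e: "{y \<in> MinRep 3 n. d1 < y} = {}" using MR1 by fastforce
  show "d1 \<in> MinRep 3 n \<and> card {y \<in> MinRep 3 n. d1 < y} = 1 - 1" unfolding e using d1_MinRep by simp
next
  fix x assume x: "x \<in> MinRep 3 n \<and> card {y \<in> MinRep 3 n. x < y} = 1 - 1"
  have "finite {y \<in> MinRep 3 n. x < y}" using MinRep_finite by simp
  then have "{y \<in> MinRep 3 n. x < y} = {}" using x by simp
  then have "\<not> x < d1" using d1_MinRep by blast
  then show "x = d1" using MR1[of x] x d1_ge by fastforce
qed

lemma delta2: "delta_idx 3 2 n = d1 - 2"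
  unfolding delta_idx_def
proof (rule the_equality)
  have "{y \<in> MinRep 3 n. d1 - 2 < y} = {d1}" using MR1 d1_MinRep d1_ge by fastforce
  then show "d1 - 2 \<in> MinRep 3 n \<and> card {y \<in> MinRep 3 n. d1 - 2 < y} = 2 - 1" using d12_MinRep by simp
next
  fix x assume x: "x \<in> MinRep 3 n \<and> card {y \<in> MinRep 3 n. x < y} = 2 - 1"
  have fin: "finite {y \<in> MinRep 3 n. x < y}" using MinRep_finite by simp
  show "x = d1 - 2"
  proof (rule ccontr)
    assume ne: "x \<noteq> d1 - 2"
    show False
    proof (cases "x = d1")
      case True
      then have e: "{y \<in> MinRep 3 n. x < y} = {}" using MR1 by fastforce
      have "card {y \<in> MinRep 3 n. x < y} = 1" using x by simp
      then show False unfolding e by simp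
    next
      case False
      then have "x < d1 - 2" using MR1[of x] x ne by simp
      then have "{d1, d1 - 2} \<subseteq> {y \<in> MinRep 3 n. x < y}" using d1_MinRep d12_MinRep d1_ge by auto
      then have "card {d1, d1 - 2} \<le> card {y \<in> MinRep 3 n. x < y}" using fin by (rule card_mono[rotated])
      then show False using x d1_ge by simp
    qed
  qed
qed

lemma Zchar:
  assumes D: "d1 - 2 \<le> D" "D \<le> d1 - 1" and j: "0 < j" "j < n"
  shows "(\<exists>i. 1 \<le> i \<and> i \<le> D \<and> j \<in> C i) \<longleftrightarrow> j \<notin> C d1"
proof
  assume "\<exists>i. 1 \<le> i \<and> i \<le> D \<and> j \<in> C i"
  then obtain i where i: "1 \<le> i" "i \<le> D" "j \<in> C i" by blast
  have il: "i < n" using i D d1_lt by simp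
  show "j \<notin> C d1"
  proof
    assume "j \<in> C d1"
    then have "C j = C d1" using coset_eq[OF d1_lt] by blast
    moreover have "C j = C i" using coset_eq[OF il i(3)] .
    ultimately have "i \<in> C d1" using coset_self[OF il] by simp
    then have "d1 \<le> i" by (rule T2)
    then show False using i D d1_ge by simp
  qed
next
  assume "j \<notin> C d1"
  then obtain y where y: "y \<in> C j" "0 < y" "y \<le> d1 - 2" using small_elem[OF j] by blast
  have "j mod n \<in> C y" using coset_sym[OF y(1)] .
  then have "j \<in> C y" using j by simp
  then show "\<exists>i. 1 \<le> i \<and> i \<le> D \<and> j \<in> C i" using y D by (intro exI[of _ y]) auto
qed

end

lemma to_int_three: "to_int_mod_ring (x :: F3) \<in> {0,1,2}"
proof -
  have "to_int_mod_ring x \<in> range (to_int_mod_ring :: F3 \<Rightarrow> int)" by simp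
  also have "\<dots> = {0..<3}" using range_to_int_mod_ring[where 'a = three] by (simp add: card_three)
  finally have h: "to_int_mod_ring x \<in> {0..<3}" .
  have "\<forall>i::int. i \<in> {0..<3} \<longrightarrow> i \<in> {0,1,2}" by auto
  then show ?thesis using h by blast
qed

lemma emb3_field_hom:
  assumes "CHAR('k::field) = 3"
  shows "field_hom (emb3 :: F3 \<Rightarrow> 'k)"
proof -
  have m: "of_int (a mod 3) = (of_int a :: 'k)" for a
    using of_int_mod_CHAR[of a, where 'a = 'k] assms by simp
  show ?thesis
  proof (unfold_locales)
    show "emb3 0 = (0::'k)" by (simp add: emb3_def)
    show "emb3 1 = (1::'k)" by (simp add: emb3_def)
    fix x y :: F3
    show "emb3 (x * y) = (emb3 x * emb3 y :: 'k)"
      unfolding emb3_def to_int_mod_ring_mult card_three using m by simp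
    show "emb3 (x + y) = (emb3 x + emb3 y :: 'k)"
      unfolding emb3_def to_int_mod_ring_add card_three using m by simp
  qed
qed

lemma emb3_inj:
  assumes "CHAR('k::field) = 3" "(emb3 x :: 'k) = 0"
  shows "x = 0"
proof -
  have "(of_int (to_int_mod_ring x) :: 'k) = of_int 0" using assms(2) by (simp add: emb3_def)
  then have "[to_int_mod_ring x = 0] (mod int CHAR('k))" by (simp only: of_int_eq_iff_cong_CHAR)
  then have "3 dvd to_int_mod_ring x" using assms(1) by (simp add: cong_0_iff)
  then have "to_int_mod_ring x = 0" using to_int_three[of x] by auto
  then show ?thesis by (metis of_int_mod_ring_to_int_mod_ring to_int_mod_ring_hom.hom_zero)
qed


lemma three_eq_0: "CHAR('k::field) = 3 \<Longrightarrow> (3::'k) = 0"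
  using of_nat_CHAR[where 'a='k] by simp

lemma cube_add: "CHAR('k::field) = 3 \<Longrightarrow> ((u::'k) + v)^3 = u^3 + v^3"
proof -
  assume c: "CHAR('k) = 3"
  have "(u + v)^3 = u^3 + v^3 + 3 * (u*v*(u+v))" by (simp add: power3_eq_cube algebra_simps)
  then show ?thesis using three_eq_0[OF c] by simp
qed

lemma cube_emb3: "CHAR('k::field) = 3 \<Longrightarrow> (emb3 a :: 'k)^3 = emb3 a"
proof -
  assume c: "CHAR('k) = 3"
  define t where "t = to_int_mod_ring a"
  have t: "t \<in> {0,1,2}" unfolding t_def by (rule to_int_three)
  have "(emb3 a :: 'k)^3 = of_int (t^3)" unfolding emb3_def t_def by simp
  also have "\<dots> = of_int (t^3 mod 3)" using of_int_mod_CHAR[of "t^3", where 'a='k] c by simp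
  also have "t^3 mod 3 = t" using t by auto
  finally show ?thesis unfolding emb3_def t_def by simp
qed

lemma cube_fixed:
  assumes c: "CHAR('k::field) = 3" and x: "(x::'k)^3 = x"
  shows "\<exists>a. emb3 a = x"
proof -
  have "x * (x - 1) * (x + 1) = 0" using x by (simp add: power3_eq_cube algebra_simps)
  then have "x = 0 \<or> x = 1 \<or> x = -1" by (auto simp: eq_neg_iff_add_eq_0)
  moreover have "emb3 (0::F3) = (0::'k)" "emb3 (1::F3) = (1::'k)" by (simp_all add: emb3_def)
  moreover have "emb3 (-1::F3) = (-1::'k)"
  proof -
    interpret h: field_hom "emb3 :: F3 \<Rightarrow> 'k" by (rule emb3_field_hom[OF c])
    show ?thesis by (simp add: h.hom_uminus)
  qed
  ultimately show ?thesis by blast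
qed

definition linprod :: "'a set \<Rightarrow> 'a::idom poly" where "linprod A = (\<Prod>a\<in>A. [:-a, 1:])"

lemma linprod_deg: "finite A \<Longrightarrow> degree (linprod A) = card A"
  unfolding linprod_def by (subst degree_prod_sum_eq) auto

lemma linprod_roots: "finite A \<Longrightarrow> {x. poly (linprod A) x = 0} = A"
  unfolding linprod_def by (auto simp: poly_prod)

lemma linprod_nz: "finite A \<Longrightarrow> linprod A \<noteq> 0"
  unfolding linprod_def by auto

lemma linprod_monic: "monic (linprod A)"
  unfolding linprod_def by (simp add: lead_coeff_prod)

lemma roots_deg:
  fixes p :: "'a::idom poly"
  assumes A: "finite A" and d: "p dvd linprod A"
  shows "degree p = card {x. poly p x = 0}"
proof -
  obtain r where r: "linprod A = p * r" using d by blast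
  have nz: "p \<noteq> 0" "r \<noteq> 0" using r linprod_nz[OF A] by auto
  have deg: "card A = degree p + degree r" using r linprod_deg[OF A] nz by (simp add: degree_mult_eq)
  have "A = {x. poly (p * r) x = 0}" using linprod_roots[OF A] r by simp
  also have "\<dots> = {x. poly p x = 0} \<union> {x. poly r x = 0}" by auto
  finally have "card A \<le> card {x. poly p x = 0} + card {x. poly r x = 0}"
    by (metis card_Un_le)
  moreover have "card {x. poly p x = 0} \<le> degree p" using nz(1) by (rule poly_roots_degree)
  moreover have "card {x. poly r x = 0} \<le> degree r" using nz(2) by (rule poly_roots_degree)
  ultimately show ?thesis using deg by linarith
qed

lemma eq_linprod:
  fixes p :: "'a::idom poly"
  assumes A: "finite A" and mon: "monic p" and dg: "degree p = card A"
    and rt: "\<forall>a\<in>A. poly p a = 0"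
  shows "p = linprod A"
proof (rule ccontr)
  define D where "D = p - linprod A"
  assume "p \<noteq> linprod A"
  then have D0: "D \<noteq> 0" unfolding D_def by simp
  have "coeff D (card A) = 0"
    unfolding D_def using mon dg linprod_monic[of A] linprod_deg[OF A] by simp
  moreover have "degree D \<le> card A" unfolding D_def using dg linprod_deg[OF A]
    by (intro degree_diff_le) simp_all
  ultimately have lt: "degree D < card A" using D0
    by (metis le_neq_implies_less leading_coeff_0_iff)
  have "A \<subseteq> {x. poly D x = 0}" unfolding D_def using rt linprod_roots[OF A] by auto
  then have "card A \<le> card {x. poly D x = 0}"
    using poly_roots_finite[OF D0] by (rule card_mono[rotated])
  also have "\<dots> \<le> degree D" using D0 by (rule poly_roots_degree)
  finally show False using lt by simp
qed

lemma vander: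
  fixes x u :: "nat \<Rightarrow> 'a::field"
  assumes S: "finite S" and inj: "inj_on x S" and nz: "\<forall>j\<in>S. x j \<noteq> 0"
    and eq: "\<forall>k<card S. (\<Sum>j\<in>S. u j * x j ^ (b + k)) = 0"
  shows "\<forall>j\<in>S. u j = 0"
proof
  fix j0 assume j0: "j0 \<in> S"
  define L where "L = (\<Prod>j\<in>S - {j0}. [:-(x j), 1:])"
  have dL: "degree L = card S - 1"
    unfolding L_def using S j0 by (subst degree_prod_sum_eq) auto
  have "(\<Sum>t\<le>degree L. coeff L t * (\<Sum>j\<in>S. u j * x j ^ (b + t))) = 0"
  proof (rule sum.neutral, intro ballI)
    fix t assume "t \<in> {..degree L}"
    then have "t < card S" using dL j0 S by (cases "card S") (auto simp: card_gt_0_iff)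
    then show "coeff L t * (\<Sum>j\<in>S. u j * x j ^ (b + t)) = 0" using eq by simp
  qed
  also have "(\<Sum>t\<le>degree L. coeff L t * (\<Sum>j\<in>S. u j * x j ^ (b + t)))
      = (\<Sum>j\<in>S. u j * x j ^ b * poly L (x j))"
    by (simp add: poly_altdef sum_distrib_left sum_distrib_right power_add mult_ac sum.swap[of _ S])
  also have "\<dots> = u j0 * x j0 ^ b * poly L (x j0) + (\<Sum>j\<in>S - {j0}. u j * x j ^ b * poly L (x j))"
    using S j0 by (simp add: sum.remove)
  also have "(\<Sum>j\<in>S - {j0}. u j * x j ^ b * poly L (x j)) = 0"
    unfolding L_def using S by (intro sum.neutral) (auto simp: poly_prod)
  finally have "u j0 * x j0 ^ b * poly L (x j0) = 0" by simp
  moreover have "poly L (x j0) \<noteq> 0"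
    unfolding L_def poly_prod using S j0 inj by (auto simp: inj_on_def)
  moreover have "x j0 ^ b \<noteq> 0" using nz j0 by simp
  ultimately show "u j0 = 0" by auto
qed

locale bch = tern m n for m n +
  fixes \<beta> :: "'k::{field,finite}"
  assumes char3: "CHAR('k) = 3" and bn: "\<beta> ^ n = 1"
    and binj: "\<And>i j. i < n \<Longrightarrow> j < n \<Longrightarrow> \<beta>^i = \<beta>^j \<Longrightarrow> i = j"
begin

sublocale e3: field_hom "emb3 :: F3 \<Rightarrow> 'k" by (rule emb3_field_hom[OF char3])
sublocale m3: map_poly_inj_idom_divide_hom "emb3 :: F3 \<Rightarrow> 'k" ..

abbreviation M :: "F3 poly \<Rightarrow> 'k poly" where "M p \<equiv> map_poly emb3 p"

lemma M_mult: "M (p * q) = M p * M q" by (rule m3.hom_mult)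
lemma M_add: "M (p + q) = M p + M q" by (rule m3.hom_add)
lemma M_dvd: "M p dvd M q \<longleftrightarrow> p dvd q" by (rule m3.hom_dvd_iff)
lemma M_degree: "degree (M p) = degree p" by simp
lemma M_eq0: "M p = 0 \<longleftrightarrow> p = 0" by simp

lemma frob: "poly (M p) (x^3) = (poly (M p) x)^3"
proof (induction p)
  case 0 then show ?case by simp
next
  case (pCons a p)
  have "poly (M (pCons a p)) (x^3) = emb3 a + x^3 * poly (M p) (x^3)" by (simp add: e3.map_poly_pCons_hom)
  also have "\<dots> = emb3 a ^ 3 + (x * poly (M p) x)^3" using pCons(2) cube_emb3[OF char3] by (simp add: power_mult_distrib)
  also have "\<dots> = (emb3 a + x * poly (M p) x)^3" using cube_add[OF char3] by simp
  finally show ?case by (simp add: e3.map_poly_pCons_hom)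
qed

lemma frob_pow: "poly (M p) (x^(3^k)) = (poly (M p) x)^(3^k)"
proof (induction k)
  case 0 then show ?case by simp
next
  case (Suc k)
  have "x^(3^Suc k) = (x^(3^k))^3" by (simp add: power_mult[symmetric] mult.commute)
  then have "poly (M p) (x^(3^Suc k)) = (poly (M p) (x^(3^k)))^3" using frob by simp
  also have "\<dots> = (poly (M p) x)^(3^Suc k)" using Suc by (simp add: power_mult[symmetric] mult.commute)
  finally show ?case .
qed


definition xn1 :: "F3 poly" where "xn1 = [:-1:] + monom 1 n"

lemma n_ge1: "1 \<le> n" using n_pos by simp

lemma M_xn1: "M xn1 = [:-1:] + monom 1 n"
  unfolding xn1_def by (simp add: M_add e3.hom_uminus)

lemma poly_xn1: "poly (M xn1) x = x^n - 1"
  unfolding M_xn1 by (simp add: poly_monom)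

lemma degree_xn1: "degree xn1 = n"
  unfolding xn1_def using n_ge1 by (simp add: degree_add_eq_right degree_monom_eq)

lemma monic_xn1: "monic (M xn1)"
proof -
  have "coeff [:-1::'k:] n = 0" using n_ge1 by (cases n) auto
  then have "coeff ([:-1:] + monom (1::'k) n) n = 1" by (simp add: coeff_monom)
  moreover have "degree (M xn1) = n" using degree_xn1 by simp
  ultimately show ?thesis unfolding M_xn1 by simp
qed

lemma xn1_nz: "xn1 \<noteq> 0" using degree_xn1 n_ge1 by auto

definition Bset :: "'k set" where "Bset = (\<lambda>i. \<beta>^i) ` {..<n}"

lemma Bset_card: "card Bset = n"
proof -
  have "inj_on (\<lambda>i. \<beta>^i) {..<n}" by (auto intro: inj_onI binj)
  then show ?thesis unfolding Bset_def by (simp add: card_image)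
qed

lemma Bset_finite: "finite Bset" unfolding Bset_def by simp

lemma bpow_n: "(\<beta>^i)^n = 1"
proof -
  have "(\<beta>^i)^n = \<beta>^(i*n)" by (simp only: power_mult)
  also have "\<dots> = (\<beta>^n)^i" by (simp only: power_mult[symmetric] mult.commute)
  finally show ?thesis using bn by simp
qed

lemma M_xn1_linprod: "M xn1 = linprod Bset"
proof (rule eq_linprod[OF Bset_finite monic_xn1])
  show "degree (M xn1) = card Bset" using Bset_card degree_xn1 by simp
  show "\<forall>a\<in>Bset. poly (M xn1) a = 0"
    unfolding Bset_def poly_xn1 by (auto simp: bpow_n)
qed

lemma root_xn1: "poly (M xn1) x = 0 \<Longrightarrow> \<exists>j<n. x = \<beta>^j"
  using linprod_roots[OF Bset_finite] M_xn1_linprod unfolding Bset_def by auto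

lemma beta_root: "poly (M xn1) (\<beta>^j) = 0"
  unfolding poly_xn1 by (simp add: bpow_n)

lemma beta_nz: "\<beta> \<noteq> 0" using bn n_ge1 by (cases n) auto

lemma beta_mod: "\<beta>^j = \<beta>^(j mod n)"
proof -
  have "\<beta>^j = \<beta>^(n * (j div n) + j mod n)" by simp
  also have "\<dots> = \<beta>^(j mod n)" by (simp only: power_add power_mult bn) simp
  finally show ?thesis .
qed


lemma ev_smult: "poly (M (smult c p)) x = emb3 c * poly (M p) x"
  by (simp add: e3.map_poly_hom_smult)

lemma ev_mult: "poly (M (p * q)) x = poly (M p) x * poly (M q) x"
  by (simp add: M_mult)

lemma ev_add: "poly (M (p + q)) x = poly (M p) x + poly (M q) x"
  by (simp add: M_add)

lemma minpoly_unique: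
  "\<exists>r. r \<noteq> 0 \<and> poly (M r) \<gamma> = 0 \<Longrightarrow>
   \<exists>!p. monic p \<and> poly (M p) \<gamma> = 0 \<and> (\<forall>r. poly (M r) \<gamma> = 0 \<longrightarrow> p dvd r)"
proof -
  assume ex: "\<exists>r. r \<noteq> 0 \<and> poly (M r) \<gamma> = 0"
  define P where "P = (\<lambda>d. \<exists>r. r \<noteq> 0 \<and> poly (M r) \<gamma> = 0 \<and> degree r = d)"
  have "\<exists>d. P d" using ex unfolding P_def by blast
  then have "P (LEAST d. P d)" by (rule LeastI_ex)
  then obtain r0 where r0: "r0 \<noteq> 0" "poly (M r0) \<gamma> = 0" "degree r0 = (LEAST d. P d)"
    unfolding P_def by blast
  define p where "p = smult (inverse (lead_coeff r0)) r0"
  have lc: "lead_coeff r0 \<noteq> 0" using r0(1) by simp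
  have mp: "monic p" unfolding p_def using lc by simp
  have rp: "poly (M p) \<gamma> = 0" unfolding p_def ev_smult using r0 by simp
  have dp: "degree p = (LEAST d. P d)" unfolding p_def using lc r0 by simp
  have p0: "p \<noteq> 0" using mp by auto
  have dv: "\<forall>r. poly (M r) \<gamma> = 0 \<longrightarrow> p dvd r"
  proof (intro allI impI)
    fix r assume r: "poly (M r) \<gamma> = 0"
    have "r = p * (r div p) + r mod p" by simp
    then have "poly (M r) \<gamma> = poly (M p) \<gamma> * poly (M (r div p)) \<gamma> + poly (M (r mod p)) \<gamma>"
      by (metis ev_add ev_mult)
    then have rm: "poly (M (r mod p)) \<gamma> = 0" using r rp by simp
    show "p dvd r"
    proof (rule ccontr)
      assume "\<not> p dvd r"
      then have nz: "r mod p \<noteq> 0" by (simp add: mod_eq_0_iff_dvd)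
      have "degree (r mod p) < degree p" using degree_mod_less'[OF p0 nz] .
      moreover have "P (degree (r mod p))" unfolding P_def using nz rm by blast
      then have "(LEAST d. P d) \<le> degree (r mod p)" by (rule Least_le)
      ultimately show False using dp by simp
    qed
  qed
  show ?thesis
  proof (rule ex1I[of _ p])
    show "monic p \<and> poly (M p) \<gamma> = 0 \<and> (\<forall>r. poly (M r) \<gamma> = 0 \<longrightarrow> p dvd r)" using mp rp dv by blast
  next
    fix q assume q: "monic q \<and> poly (M q) \<gamma> = 0 \<and> (\<forall>r. poly (M r) \<gamma> = 0 \<longrightarrow> q dvd r)"
    show "q = p"
      by (rule poly_dvd_antisym) (use q mp rp dv in auto)
  qed
qed

lemma minpoly3_props:
  assumes "\<exists>r. r \<noteq> 0 \<and> poly (M r) \<gamma> = 0"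
  shows "monic (minpoly3 \<gamma>)" "poly (M (minpoly3 \<gamma>)) \<gamma> = 0"
    "\<And>r. poly (M r) \<gamma> = 0 \<Longrightarrow> minpoly3 \<gamma> dvd r"
proof -
  have "monic (minpoly3 \<gamma>) \<and> poly (M (minpoly3 \<gamma>)) \<gamma> = 0 \<and> (\<forall>r. poly (M r) \<gamma> = 0 \<longrightarrow> minpoly3 \<gamma> dvd r)"
    unfolding minpoly3_def by (rule theI'[OF minpoly_unique[OF assms]])
  then show "monic (minpoly3 \<gamma>)" "poly (M (minpoly3 \<gamma>)) \<gamma> = 0"
    "\<And>r. poly (M r) \<gamma> = 0 \<Longrightarrow> minpoly3 \<gamma> dvd r" by auto
qed

lemma ex_root_beta: "\<exists>r. r \<noteq> 0 \<and> poly (M r) (\<beta>^j) = 0"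
  using xn1_nz beta_root by blast

lemma mp_props:
  "monic (minpoly3 (\<beta>^j))" "poly (M (minpoly3 (\<beta>^j))) (\<beta>^j) = 0"
  "\<And>r. poly (M r) (\<beta>^j) = 0 \<Longrightarrow> minpoly3 (\<beta>^j) dvd r"
  using minpoly3_props[OF ex_root_beta] by auto

lemma mp_dvd_xn1: "minpoly3 (\<beta>^j) dvd xn1"
  using mp_props(3) beta_root by blast

lemma mp_conj: "poly (M (minpoly3 (\<beta>^s))) (\<beta>^(s * 3^k mod n)) = 0"
proof -
  have "\<beta>^(s * 3^k mod n) = (\<beta>^s)^(3^k)" using beta_mod[of "s*3^k"] by (simp add: power_mult)
  then show ?thesis using frob_pow mp_props(2) by simp
qed


definition Pk :: "nat \<Rightarrow> 'k poly" where "Pk s = (\<Prod>l\<in>C s. [:-(\<beta>^l), 1:])"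

lemma times3_bij: "(\<lambda>l. l * 3 mod n) ` C s = C s"
proof (rule endo_inj_surj[OF coset_finite])
  show "(\<lambda>l. l * 3 mod n) ` C s \<subseteq> C s" using coset_mul[of _ s 1] by auto
  show "inj_on (\<lambda>l. l * 3 mod n) (C s)"
  proof (rule inj_onI)
    fix x y assume xy: "x \<in> C s" "y \<in> C s" "x * 3 mod n = y * 3 mod n"
    then have "[x * 3 = y * 3] (mod n)" by (simp add: cong_def)
    then have "[x = y] (mod n)" using coprime3 by (simp add: cong_mult_rcancel_nat coprime_commute)
    then show "x = y" using xy coset_lt by (simp add: cong_def)
  qed
qed

lemma Pk_frob: "map_poly (\<lambda>x::'k. x^3) (Pk s) = Pk s"
proof -
  interpret f3: comm_ring_hom "\<lambda>x::'k. x^3"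
    by unfold_locales (simp_all add: cube_add[OF char3] power_mult_distrib)
  interpret mf3: map_poly_comm_ring_hom "\<lambda>x::'k. x^3" ..
  have "map_poly (\<lambda>x::'k. x^3) (Pk s) = (\<Prod>l\<in>C s. map_poly (\<lambda>x::'k. x^3) [:-(\<beta>^l), 1:])"
    unfolding Pk_def by (rule mf3.hom_prod)
  also have "\<dots> = (\<Prod>l\<in>C s. [:-(\<beta>^(l * 3 mod n)), 1:])"
  proof (rule prod.cong[OF refl])
    fix l
    have "(\<beta>^l)^3 = \<beta>^(l*3 mod n)" using beta_mod[of "l*3"] by (simp add: power_mult)
    then show "map_poly (\<lambda>x::'k. x^3) [:-(\<beta>^l), 1:] = [:-(\<beta>^(l * 3 mod n)), 1:]"
      by (simp add: f3.hom_uminus)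
  qed
  also have "\<dots> = (\<Prod>l\<in>(\<lambda>l. l * 3 mod n) ` C s. [:-(\<beta>^l), 1:])"
  proof -
    have "inj_on (\<lambda>l. l * 3 mod n) (C s)"
      using times3_bij coset_finite by (simp add: eq_card_imp_inj_on)
    then show ?thesis by (simp add: prod.reindex)
  qed
  also have "\<dots> = Pk s" unfolding times3_bij Pk_def ..
  finally show ?thesis .
qed

lemma Pk_coeff: "\<exists>a. emb3 a = coeff (Pk s) i"
proof -
  have "coeff (map_poly (\<lambda>x::'k. x^3) (Pk s)) i = coeff (Pk s) i" using Pk_frob by simp
  then have "(coeff (Pk s) i)^3 = coeff (Pk s) i" by (simp add: coeff_map_poly)
  then show ?thesis by (rule cube_fixed[OF char3])
qed

definition inv3 :: "'k \<Rightarrow> F3" where "inv3 x = (SOME a. emb3 a = x)"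

lemma inv3_0: "inv3 0 = 0"
proof -
  have "emb3 (inv3 0) = (0::'k)" unfolding inv3_def by (rule someI[of _ 0]) simp
  then show ?thesis by simp
qed

definition Q3 :: "nat \<Rightarrow> F3 poly" where "Q3 s = map_poly inv3 (Pk s)"

lemma M_Q3: "M (Q3 s) = Pk s"
proof (rule poly_eqI)
  fix i
  have "coeff (M (Q3 s)) i = emb3 (inv3 (coeff (Pk s) i))"
    unfolding Q3_def by (simp add: coeff_map_poly inv3_0)
  also have "\<dots> = coeff (Pk s) i" unfolding inv3_def using Pk_coeff by (rule someI_ex)
  finally show "coeff (M (Q3 s)) i = coeff (Pk s) i" .
qed

lemma Pk_roots: "poly (Pk s) x = 0 \<Longrightarrow> \<exists>l\<in>C s. x = \<beta>^l"
  unfolding Pk_def by (auto simp: poly_prod coset_finite)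

lemma mp_dvd_Q3: "s < n \<Longrightarrow> minpoly3 (\<beta>^s) dvd Q3 s"
proof -
  assume "s < n"
  then have "s \<in> C s" by (rule coset_self)
  then have "poly (Pk s) (\<beta>^s) = 0" unfolding Pk_def by (auto simp: poly_prod coset_finite)
  then show ?thesis using mp_props(3) M_Q3 by simp
qed


definition gS :: "nat set \<Rightarrow> F3 poly" where "gS S = Lcm ((\<lambda>i. minpoly3 (\<beta>^i)) ` S)"
definition ZS :: "nat set \<Rightarrow> nat set" where "ZS S = (\<Union>i\<in>S. C i)"

lemma ZS_lt: "j \<in> ZS S \<Longrightarrow> j < n" unfolding ZS_def using coset_lt by auto

lemma poly_dvd_root: "p dvd q \<Longrightarrow> poly p x = 0 \<Longrightarrow> poly q x = (0::'k)"
  by (auto simp: dvd_def)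

lemma gS_dvd_xn1: "gS S dvd xn1"
  unfolding gS_def by (rule Lcm_least) (auto intro: mp_dvd_xn1)

lemma gS_nz: "gS S \<noteq> 0" using gS_dvd_xn1[of S] xn1_nz by auto

lemma gS_roots:
  assumes S: "finite S" "\<forall>i\<in>S. i < n" and j: "j < n"
  shows "poly (M (gS S)) (\<beta>^j) = 0 \<longleftrightarrow> j \<in> ZS S"
proof
  assume "j \<in> ZS S"
  then obtain i where i: "i \<in> S" "j \<in> C i" unfolding ZS_def by blast
  then obtain k where k: "j = i * 3^k mod n" by (auto simp: coset_range)
  have "poly (M (minpoly3 (\<beta>^i))) (\<beta>^j) = 0" unfolding k by (rule mp_conj)
  moreover have "minpoly3 (\<beta>^i) dvd gS S" unfolding gS_def using i(1) by (intro dvd_Lcm) auto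
  then have "M (minpoly3 (\<beta>^i)) dvd M (gS S)" by (simp add: M_dvd)
  ultimately show "poly (M (gS S)) (\<beta>^j) = 0" by (rule poly_dvd_root[rotated])
next
  assume r: "poly (M (gS S)) (\<beta>^j) = 0"
  have "gS S dvd (\<Prod>i\<in>S. Q3 i)"
    unfolding gS_def
  proof (rule Lcm_least)
    fix p assume "p \<in> (\<lambda>i. minpoly3 (\<beta>^i)) ` S"
    then obtain i where i: "i \<in> S" "p = minpoly3 (\<beta>^i)" by blast
    have "p dvd Q3 i" using i S mp_dvd_Q3 by auto
    also have "Q3 i dvd (\<Prod>i\<in>S. Q3 i)" using i S by (intro dvd_prodI) auto
    finally show "p dvd (\<Prod>i\<in>S. Q3 i)" .
  qed
  then have "M (gS S) dvd M (\<Prod>i\<in>S. Q3 i)" by (simp add: M_dvd)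
  then have "poly (M (\<Prod>i\<in>S. Q3 i)) (\<beta>^j) = 0" using r by (rule poly_dvd_root)
  moreover have "M (\<Prod>i\<in>S. Q3 i) = (\<Prod>i\<in>S. Pk i)" by (simp add: m3.hom_prod M_Q3)
  ultimately obtain i where i: "i \<in> S" "poly (Pk i) (\<beta>^j) = 0" using S by (auto simp: poly_prod)
  then obtain l where l: "l \<in> C i" "\<beta>^j = \<beta>^l" using Pk_roots by blast
  then have "j = l" using j coset_lt binj by blast
  then show "j \<in> ZS S" using i l unfolding ZS_def by blast
qed

lemma gS_root_form: "poly (M (gS S)) x = 0 \<Longrightarrow> \<exists>j<n. x = \<beta>^j"
proof -
  assume "poly (M (gS S)) x = 0"
  moreover have "M (gS S) dvd M xn1" using gS_dvd_xn1 by (simp add: M_dvd)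
  ultimately have "poly (M xn1) x = 0" by (rule poly_dvd_root[rotated])
  then show ?thesis by (rule root_xn1)
qed

lemma gS_degree:
  assumes S: "finite S" "\<forall>i\<in>S. i < n"
  shows "degree (gS S) = card (ZS S)"
proof -
  have "M (gS S) dvd linprod Bset" using gS_dvd_xn1 M_xn1_linprod by (simp add: M_dvd[symmetric])
  then have "degree (M (gS S)) = card {x. poly (M (gS S)) x = 0}" by (rule roots_deg[OF Bset_finite])
  also have "{x. poly (M (gS S)) x = 0} = (\<lambda>j. \<beta>^j) ` ZS S"
  proof
    show "{x. poly (M (gS S)) x = 0} \<subseteq> (\<lambda>j. \<beta>^j) ` ZS S"
      using gS_root_form gS_roots[OF S] by blast
    show "(\<lambda>j. \<beta>^j) ` ZS S \<subseteq> {x. poly (M (gS S)) x = 0}"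
      using gS_roots[OF S] ZS_lt by blast
  qed
  also have "card \<dots> = card (ZS S)"
    by (rule card_image) (auto intro!: inj_onI binj dest: ZS_lt)
  finally show ?thesis by simp
qed

lemma code_char:
  assumes "g dvd xn1"
  shows "c \<in> cyclic_code n g \<longleftrightarrow> degree c < n \<and> g dvd c"
proof
  assume c: "c \<in> cyclic_code n g"
  then obtain a where dg: "degree c < n" and a: "[c = g * a] (mod xn1)"
    unfolding cyclic_code_def xn1_def by blast
  have "c mod xn1 = c" using dg degree_xn1 by (intro mod_poly_less) simp
  then have "c = (g * a) mod xn1" using a by (simp add: cong_def)
  moreover have "g dvd (g * a) mod xn1" using assms by (intro dvd_mod) auto
  ultimately show "degree c < n \<and> g dvd c" using dg by simp
next
  assume "degree c < n \<and> g dvd c"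
  then obtain a where "c = g * a" "degree c < n" by blast
  then show "c \<in> cyclic_code n g" unfolding cyclic_code_def by (auto intro: cong_refl)
qed


lemma poly_M_sum:
  "poly (M c) y = (\<Sum>i\<in>{i. coeff c i \<noteq> 0}. emb3 (coeff c i) * y ^ i)"
proof -
  have "poly (M c) y = (\<Sum>i\<le>degree c. emb3 (coeff c i) * y ^ i)"
    by (simp add: poly_altdef)
  also have "\<dots> = (\<Sum>i\<in>{i. coeff c i \<noteq> 0}. emb3 (coeff c i) * y ^ i)"
    by (rule sum.mono_neutral_right) (auto simp: le_degree)
  finally show ?thesis .
qed

lemma bch_bound:
  assumes c: "c \<noteq> 0" "degree c < n" and z: "\<forall>k<D - 1. poly (M c) (\<beta>^(b+k)) = 0"
  shows "D \<le> hweight c"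
proof (rule ccontr)
  define S where "S = {i. coeff c i \<noteq> 0}"
  assume "\<not> D \<le> hweight c"
  then have cS: "card S < D" unfolding hweight_def S_def by simp
  have fin: "finite S" unfolding S_def by (rule finite_subset[of _ "{..degree c}"]) (auto simp: le_degree)
  have Sn: "\<forall>i\<in>S. i < n" unfolding S_def using c(2) le_degree by force
  have "\<forall>i\<in>S. emb3 (coeff c i) = (0::'k)"
  proof (rule vander[OF fin, of "\<lambda>i. \<beta>^i" _ b])
    show "inj_on (\<lambda>i. \<beta>^i) S" using Sn by (auto intro!: inj_onI binj)
    show "\<forall>j\<in>S. \<beta>^j \<noteq> 0" using beta_nz by simp
    show "\<forall>k<card S. (\<Sum>j\<in>S. emb3 (coeff c j) * (\<beta>^j)^(b + k)) = 0"
    proof (intro allI impI)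
      fix k assume "k < card S"
      then have "poly (M c) (\<beta>^(b+k)) = 0" using z cS by simp
      then show "(\<Sum>j\<in>S. emb3 (coeff c j) * (\<beta>^j)^(b + k)) = 0"
        unfolding poly_M_sum S_def by (simp add: power_mult[symmetric] mult.commute)
    qed
  qed
  then have "S = {}" unfolding S_def by auto
  then have "c = 0" unfolding S_def by (auto intro: poly_eqI)
  then show False using c by simp
qed

end

interpretation pv: vector_space "smult :: F3 \<Rightarrow> F3 poly \<Rightarrow> F3 poly"
  by unfold_locales (simp_all add: smult_add_right smult_add_left)

lemma code_dim_pv: "code_dim C = pv.dim C"
  unfolding code_dim_def ..

lemma gmon: "smult (a::F3) (g * monom 1 i) = g * monom a (i::nat)"
proof -
  have e: "smult a (monom 1 i) = monom a i" by (simp add: smult_monom)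
  have "g * monom a i = g * smult a (monom 1 i)" by (simp only: e)
  also have "\<dots> = smult a (g * monom 1 i)" by (rule mult_smult_right)
  finally show ?thesis by simp
qed

context bch
begin

lemma code_subspace:
  assumes g: "g dvd xn1" shows "pv.subspace (cyclic_code n g)"
  unfolding pv.subspace_def
proof (intro conjI ballI allI)
  show "0 \<in> cyclic_code n g" unfolding code_char[OF g] using n_pos by simp
next
  fix x y assume "x \<in> cyclic_code n g" "y \<in> cyclic_code n g"
  then have xy: "degree x < n" "g dvd x" "degree y < n" "g dvd y" unfolding code_char[OF g] by auto
  have "degree (x + y) \<le> max (degree x) (degree y)" by (rule degree_add_le_max)
  then show "x + y \<in> cyclic_code n g" unfolding code_char[OF g] using xy by auto
next
  fix c x assume "x \<in> cyclic_code n g"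
  then show "smult c x \<in> cyclic_code n g" unfolding code_char[OF g]
    by (auto simp: degree_smult_le[THEN le_less_trans] intro: dvd_smult)
qed

lemma code_dim_formula:
  assumes g: "g dvd xn1"
  shows "code_dim (cyclic_code n g) = n - degree g"
proof -
  define k where "k = n - degree g"
  define B where "B = (\<lambda>i. g * monom 1 i) ` {..<k}"
  have g0: "g \<noteq> 0" using g xn1_nz by auto
  have inj: "inj_on (\<lambda>i. g * monom 1 i) {..<k}"
  proof (rule inj_onI)
    fix i j assume "g * monom 1 i = g * monom 1 j"
    then have "monom (1::F3) i = monom 1 j" using g0 by simp
    then show "i = j" by (metis coeff_monom one_neq_zero)
  qed
  have cardB: "card B = k" unfolding B_def using inj by (simp add: card_image)
  have finB: "finite B" unfolding B_def by simp
  have indep: "pv.independent B"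
    unfolding pv.dependent_finite[OF finB]
  proof
    assume "\<exists>u. (\<exists>v\<in>B. u v \<noteq> 0) \<and> (\<Sum>v\<in>B. smult (u v) v) = 0"
    then obtain c v where v: "v \<in> B" "c v \<noteq> 0" and sum0: "(\<Sum>v\<in>B. smult (c v) v) = 0" by blast
    define a where "a i = c (g * monom 1 i)" for i
    have "(\<Sum>v\<in>B. smult (c v) v) = (\<Sum>i<k. smult (a i) (g * monom 1 i))"
      unfolding B_def a_def by (simp add: sum.reindex[OF inj])
    also have "\<dots> = (\<Sum>i<k. g * monom (a i) i)"
    proof (rule sum.cong[OF refl])
      fix i
      have e: "smult (a i) (monom 1 i) = monom (a i) i" by (simp add: smult_monom)
      have "g * monom (a i) i = g * smult (a i) (monom 1 i)" by (simp only: e)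
      also have "\<dots> = smult (a i) (g * monom 1 i)" by (rule mult_smult_right)
      finally show "smult (a i) (g * monom 1 i) = g * monom (a i) i" by simp
    qed
    also have "\<dots> = g * (\<Sum>i<k. monom (a i) i)" by (simp add: sum_distrib_left)
    finally have "(\<Sum>i<k. monom (a i) i) = 0" using sum0 g0 by simp
    then have "\<forall>i<k. a i = 0"
    proof (intro allI impI)
      fix i assume "(\<Sum>i<k. monom (a i) i) = 0" "i < k"
      then have "coeff (\<Sum>i<k. monom (a i) i) i = 0" by simp
      then show "a i = 0" using \<open>i < k\<close> by (simp add: coeff_sum coeff_monom)
    qed
    then show False using v unfolding B_def a_def by auto
  qed
  have span: "cyclic_code n g = pv.span B"
  proof
    show "pv.span B \<subseteq> cyclic_code n g"
    proof (rule pv.span_minimal[OF _ code_subspace[OF g]])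
      show "B \<subseteq> cyclic_code n g"
      proof
        fix v assume "v \<in> B"
        then obtain i where i: "i < k" "v = g * monom 1 i" unfolding B_def by blast
        have "degree v = degree g + i" using i g0 by (simp add: degree_mult_eq degree_monom_eq)
        then show "v \<in> cyclic_code n g" unfolding code_char[OF g] using i unfolding k_def by auto
      qed
    qed
  next
    show "cyclic_code n g \<subseteq> pv.span B"
    proof
      fix c assume "c \<in> cyclic_code n g"
      then obtain a where c: "degree c < n" "c = g * a" unfolding code_char[OF g] by blast
      have da: "degree a < k \<or> a = 0"
        using c g0 unfolding k_def by (cases "a = 0") (auto simp: degree_mult_eq)
      have "a = (\<Sum>i<k. monom (coeff a i) i)"
      proof (rule poly_eqI)
        fix j
        show "coeff a j = coeff (\<Sum>i<k. monom (coeff a i) i) j"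
          using da by (auto simp: coeff_sum coeff_monom coeff_eq_0)
      qed
      then have "c = (\<Sum>i<k. smult (coeff a i) (g * monom 1 i))"
      proof -
        have "c = g * (\<Sum>i<k. monom (coeff a i) i)" using c(2) \<open>a = _\<close> by simp
        also have "\<dots> = (\<Sum>i<k. g * monom (coeff a i) i)" by (simp add: sum_distrib_left)
        also have "\<dots> = (\<Sum>i<k. smult (coeff a i) (g * monom 1 i))" by (simp only: gmon)
        finally show ?thesis .
      qed
      also have "\<dots> \<in> pv.span B"
        by (intro pv.span_sum pv.span_scale pv.span_base) (auto simp: B_def)
      finally show "c \<in> pv.span B" .
    qed
  qed
  show ?thesis unfolding code_dim_pv span pv.dim_span_eq_card_independent[OF indep] cardB k_def ..
qed


lemma poly_M_lt: "degree c < n \<Longrightarrow> poly (M c) y = (\<Sum>i<n. emb3 (coeff c i) * y^i)"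
proof -
  assume d: "degree c < n"
  have "poly (M c) y = (\<Sum>i\<le>degree c. emb3 (coeff c i) * y ^ i)" by (simp add: poly_altdef)
  also have "\<dots> = (\<Sum>i<n. emb3 (coeff c i) * y^i)"
    using d by (intro sum.mono_neutral_left) (auto simp: coeff_eq_0)
  finally show ?thesis .
qed

abbreviation ib where "ib \<equiv> inverse \<beta>"

lemma ib_beta: "ib^i * \<beta>^i = 1"
proof -
  have "ib^i * \<beta>^i = (ib * \<beta>)^i" by (rule power_mult_distrib[symmetric])
  also have "ib * \<beta> = 1" using beta_nz by simp
  finally show ?thesis by simp
qed

lemma ib_n: "ib^n = 1"
proof -
  have "ib^n = inverse (\<beta>^n)" by (rule power_inverse)
  then show ?thesis using bn by simp
qed

lemma term_eq: "(x::'k) * (ib^j)^i * (y * (\<beta>^j)^l) = x * y * (ib^i * \<beta>^l)^j"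
proof -
  have t1: "(ib^j)^i = (ib^i)^j" by (simp add: power_mult[symmetric] mult.commute)
  have t2: "(\<beta>^j)^l = (\<beta>^l)^j" by (simp add: power_mult[symmetric] mult.commute)
  show ?thesis unfolding t1 t2 power_mult_distrib by (simp add: mult_ac)
qed

lemma geo:
  assumes "i < n" "l < n"
  shows "(\<Sum>j<n. (ib^i * \<beta>^l)^j) = (if i = l then of_nat n else 0)"
proof (cases "i = l")
  case True then show ?thesis using ib_beta by simp
next
  case False
  define z where "z = ib^i * \<beta>^l"
  have "z \<noteq> 1"
  proof
    assume "z = 1"
    then have "\<beta>^i * z = \<beta>^i" by simp
    moreover have "\<beta>^i * z = \<beta>^l" unfolding z_def using ib_beta[of i] by (metis mult.assoc mult.commute mult_1_right)
    ultimately show False using binj assms False by metis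
  qed
  moreover have "z^n = 1"
  proof -
    have p1: "(ib^i)^n = (ib^n)^i" by (simp only: power_mult[symmetric] mult.commute)
    have p2: "(\<beta>^l)^n = (\<beta>^n)^l" by (simp only: power_mult[symmetric] mult.commute)
    show ?thesis unfolding z_def power_mult_distrib p1 p2 ib_n bn by simp
  qed
  ultimately have "(\<Sum>j<n. z^j) = 0" by (simp add: geometric_sum)
  then show ?thesis using False unfolding z_def by simp
qed

lemma parseval:
  assumes c: "degree c < n" and w: "degree w < n"
  shows "of_nat n * emb3 (\<Sum>i<n. coeff c i * coeff w i) =
    (\<Sum>j<n. poly (M c) (ib^j) * poly (M w) (\<beta>^j))"
proof -
  define a where "a i = (emb3 (coeff c i) :: 'k)" for i
  define b where "b i = (emb3 (coeff w i) :: 'k)" for i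
  have "(\<Sum>j<n. poly (M c) (ib^j) * poly (M w) (\<beta>^j))
      = (\<Sum>j<n. (\<Sum>i<n. a i * (ib^j)^i) * (\<Sum>l<n. b l * (\<beta>^j)^l))"
    unfolding poly_M_lt[OF c] poly_M_lt[OF w] a_def b_def ..
  also have "\<dots> = (\<Sum>j<n. \<Sum>i<n. \<Sum>l<n. a i * b l * (ib^i * \<beta>^l)^j)"
    unfolding sum_product by (simp only: term_eq)
  also have "\<dots> = (\<Sum>i<n. \<Sum>j<n. \<Sum>l<n. a i * b l * (ib^i * \<beta>^l)^j)"
    by (rule sum.swap)
  also have "\<dots> = (\<Sum>i<n. \<Sum>l<n. \<Sum>j<n. a i * b l * (ib^i * \<beta>^l)^j)"
    by (rule sum.cong[OF refl], rule sum.swap)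
  also have "\<dots> = (\<Sum>i<n. \<Sum>l<n. a i * b l * (\<Sum>j<n. (ib^i * \<beta>^l)^j))"
    by (simp only: sum_distrib_left)
  also have "\<dots> = (\<Sum>i<n. \<Sum>l<n. (if l = i then a i * b l * of_nat n else 0))"
    by (intro sum.cong refl) (auto simp: geo)
  also have "\<dots> = (\<Sum>i<n. a i * b i * of_nat n)"
    by (intro sum.cong refl) (simp add: sum.delta)
  also have "\<dots> = of_nat n * (\<Sum>i<n. a i * b i)"
    by (simp add: sum_distrib_left mult.commute)
  also have "(\<Sum>i<n. a i * b i) = emb3 (\<Sum>i<n. coeff c i * coeff w i)"
    unfolding a_def b_def by (simp add: e3.hom_sum e3.hom_mult)
  finally show ?thesis by simp
qed


lemma poly_mod_root: "poly (M xn1) x = 0 \<Longrightarrow> poly (M (p mod xn1)) x = poly (M p) x"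
proof -
  assume r: "poly (M xn1) x = 0"
  have "p = xn1 * (p div xn1) + p mod xn1" by simp
  then have "poly (M p) x = poly (M xn1) x * poly (M (p div xn1)) x + poly (M (p mod xn1)) x"
    by (metis ev_add ev_mult)
  then show ?thesis using r by simp
qed

lemma code_zero_roots:
  assumes S: "finite S" "\<forall>i\<in>S. i < n" and c: "c \<in> cyclic_code n (gS S)" and j: "j \<in> ZS S"
  shows "poly (M c) (\<beta>^j) = 0"
proof -
  have "gS S dvd c" using c code_char[OF gS_dvd_xn1] by blast
  then have "M (gS S) dvd M c" by (simp add: M_dvd)
  moreover have "poly (M (gS S)) (\<beta>^j) = 0" using gS_roots[OF S ZS_lt[OF j]] j by simp
  ultimately show ?thesis by (rule poly_dvd_root)
qed

lemma lcd:
  assumes S: "finite S" "\<forall>i\<in>S. i < n" and negc: "\<forall>j\<in>ZS S. (n - j) mod n \<in> ZS S"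
  shows "is_LCD n (cyclic_code n (gS S))"
proof -
  define g where "g = gS S"
  define CC where "CC = cyclic_code n g"
  have G: "g dvd xn1" unfolding g_def by (rule gS_dvd_xn1)
  have z1: "0 \<in> CC" unfolding CC_def code_char[OF G] using n_pos by simp
  have z2: "0 \<in> dual_code n CC" unfolding dual_code_def using n_pos by simp
  have "CC \<inter> dual_code n CC \<subseteq> {0}"
  proof
    fix c assume "c \<in> CC \<inter> dual_code n CC"
    then have cC: "c \<in> CC" and cD: "c \<in> dual_code n CC" by auto
    have dc: "degree c < n" using cC unfolding CC_def code_char[OF G] by blast
    define w where "w k = (monom 1 k * g) mod xn1" for k
    have wC: "w k \<in> CC" for k
    proof -
      have "degree (w k) < n"
      proof (cases "w k = 0")
        case True then show ?thesis using n_pos by simp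
      next
        case False
        then show ?thesis unfolding w_def using degree_mod_less'[OF xn1_nz] degree_xn1 by (simp add: w_def)
      qed
      moreover have "g dvd w k" unfolding w_def using G by (intro dvd_mod) auto
      ultimately show ?thesis unfolding CC_def code_char[OF G] by blast
    qed
    have u0: "\<forall>j\<in>{..<n}. poly (M c) (ib^j) * poly (M g) (\<beta>^j) = 0"
    proof (rule vander[of "{..<n}" "\<lambda>j. \<beta>^j" _ 0])
      show "inj_on (\<lambda>j. \<beta>^j) {..<n}" by (auto intro!: inj_onI binj)
      show "\<forall>j\<in>{..<n}. \<beta>^j \<noteq> 0" using beta_nz by simp
      show "\<forall>k<card {..<n}. (\<Sum>j\<in>{..<n}. poly (M c) (ib^j) * poly (M g) (\<beta>^j) * (\<beta>^j)^(0 + k)) = 0"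
      proof (intro allI impI)
        fix k
        have dw: "degree (w k) < n" using wC[of k] unfolding CC_def code_char[OF G] by blast
        have "(\<Sum>i<n. coeff c i * coeff (w k) i) = 0" using cD wC[of k] unfolding dual_code_def by blast
        then have "(\<Sum>j<n. poly (M c) (ib^j) * poly (M (w k)) (\<beta>^j)) = 0"
          using parseval[OF dc dw] by simp
        moreover have "poly (M (w k)) (\<beta>^j) = poly (M g) (\<beta>^j) * (\<beta>^j)^k" for j
          unfolding w_def poly_mod_root[OF beta_root] ev_mult by (simp add: poly_monom mult.commute)
        ultimately show "(\<Sum>j\<in>{..<n}. poly (M c) (ib^j) * poly (M g) (\<beta>^j) * (\<beta>^j)^(0 + k)) = 0"
          by (simp add: mult.assoc)
      qed
    qed simp
    have allr: "poly (M c) (\<beta>^j') = 0" if j': "j' < n" for j'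
    proof (cases "j' \<in> ZS S")
      case True
      then show ?thesis using code_zero_roots[OF S] cC unfolding CC_def g_def by blast
    next
      case False
      define j where "j = (n - j') mod n"
      have jn: "j < n" unfolding j_def using n_pos by simp
      have jback: "(n - j) mod n = j'"
      proof (cases "j' = 0")
        case True then show ?thesis unfolding j_def by simp
      next
        case False then show ?thesis unfolding j_def using j' by simp
      qed
      have "j \<notin> ZS S" using negc jback False by metis
      then have "poly (M g) (\<beta>^j) \<noteq> 0" unfolding g_def using gS_roots[OF S jn] by simp
      then have ci: "poly (M c) (ib^j) = 0" using u0 jn by auto
      have "\<beta>^j * \<beta>^j' = 1"
      proof -
        have "\<beta>^j * \<beta>^j' = \<beta>^((j + j') mod n)" by (simp add: power_add[symmetric] beta_mod[of "j+j'"])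
        also have "(j + j') mod n = 0" unfolding j_def using j'
          by (cases "j' = 0") (simp_all add: mod_add_left_eq[symmetric])
        finally show ?thesis by simp
      qed
      then have "ib^j = \<beta>^j'"
        using ib_beta[of j] by (metis mult.assoc mult.commute mult_1_left)
      then show ?thesis using ci by simp
    qed
    show "c \<in> {0}"
    proof (rule ccontr)
      assume "c \<notin> {0}"
      then have c0: "M c \<noteq> 0" by simp
      have "Bset \<subseteq> {x. poly (M c) x = 0}" unfolding Bset_def using allr by auto
      then have "card Bset \<le> card {x. poly (M c) x = 0}"
        using poly_roots_finite[OF c0] by (rule card_mono[rotated])
      also have "\<dots> \<le> degree (M c)" using c0 by (rule poly_roots_degree)
      finally show False using Bset_card dc by simp
    qed
  qed
  then have "CC \<inter> dual_code n CC = {0}" using z1 z2 by auto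
  then show ?thesis unfolding is_LCD_def CC_def g_def .
qed

end

lemma pow_period: "(x::'a::monoid_mult)^d = 1 \<Longrightarrow> x^k = x^(k mod d)"
proof -
  assume d: "x^d = 1"
  have "x^k = x^(d * (k div d) + k mod d)" by simp
  also have "\<dots> = x^(k mod d)" by (simp only: power_add power_mult d) simp
  finally show ?thesis .
qed

lemma gen_period:
  fixes \<alpha> :: "'k::{field,finite}"
  assumes a0: "\<alpha> \<noteq> 0" and gen: "\<forall>x::'k. x \<noteq> 0 \<longrightarrow> (\<exists>i::nat. x = \<alpha> ^ i)"
    and d: "0 < d" "\<alpha>^d = 1"
  shows "CARD('k) - 1 \<le> d"
proof -
  have "{x::'k. x \<noteq> 0} \<subseteq> (\<lambda>i. \<alpha>^i) ` {..<d}"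
  proof
    fix x :: 'k assume "x \<in> {x. x \<noteq> 0}"
    then obtain i where "x = \<alpha>^i" using gen by auto
    then have "x = \<alpha>^(i mod d)" using pow_period[OF d(2)] by simp
    then show "x \<in> (\<lambda>i. \<alpha>^i) ` {..<d}" using d(1) by auto
  qed
  then have "card {x::'k. x \<noteq> 0} \<le> card ((\<lambda>i. \<alpha>^i) ` {..<d})" by (rule card_mono[rotated]) simp
  also have "\<dots> \<le> d" using card_image_le[of "{..<d}" "\<lambda>i. \<alpha>^i"] by simp
  finally have "card {x::'k. x \<noteq> 0} \<le> d" .
  moreover have "card {x::'k. x \<noteq> 0} = CARD('k) - 1"
  proof -
    have "{x::'k. x \<noteq> 0} = UNIV - {0}" by auto
    then show ?thesis by (simp add: card_Diff_subset)
  qed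
  ultimately show ?thesis by simp
qed

lemma gen_props:
  fixes \<alpha> :: "'k::{field,finite}"
  assumes a0: "\<alpha> \<noteq> 0" and gen: "\<forall>x::'k. x \<noteq> 0 \<longrightarrow> (\<exists>i::nat. x = \<alpha> ^ i)"
  shows "\<alpha>^(CARD('k) - 1) = 1"
    "\<And>i j. i < CARD('k) - 1 \<Longrightarrow> j < CARD('k) - 1 \<Longrightarrow> \<alpha>^i = \<alpha>^j \<Longrightarrow> i = j"
proof -
  define N where "N = CARD('k) - 1"
  have canc: "\<alpha>^(j - i) = 1" if "i < j" "\<alpha>^i = \<alpha>^j" for i j
  proof -
    have "j = i + (j - i)" using that(1) by simp
    then have "\<alpha>^j = \<alpha>^(i + (j - i))" by (rule arg_cong)
    then have "\<alpha>^j = \<alpha>^i * \<alpha>^(j - i)" by (simp only: power_add)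
    then have "\<alpha>^i * \<alpha>^(j - i) = \<alpha>^i * 1" using that by simp
    moreover have "\<alpha>^i \<noteq> 0" using a0 by simp
    ultimately show ?thesis using mult_left_cancel by blast
  qed
  have "\<not> inj_on (\<lambda>i. \<alpha>^i) {..N}"
  proof
    assume inj: "inj_on (\<lambda>i. \<alpha>^i) {..N}"
    have "(\<lambda>i. \<alpha>^i) ` {..N} \<subseteq> UNIV - {0}" using a0 by auto
    then have "card ((\<lambda>i. \<alpha>^i) ` {..N}) \<le> card (UNIV - {0::'k})" by (rule card_mono[rotated]) simp
    also have "\<dots> = N" unfolding N_def by (simp add: card_Diff_subset)
    finally show False using card_image[OF inj] by simp
  qed
  then obtain i j where ij: "i \<le> N" "j \<le> N" "i \<noteq> j" "\<alpha>^i = \<alpha>^j" unfolding inj_on_def by auto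
  obtain d where d: "0 < d" "d \<le> N" "\<alpha>^d = 1"
  proof (cases "i < j")
    case True then show ?thesis using that[of "j - i"] canc[of i j] ij by auto
  next
    case False then have "j < i" using ij by simp
    then show ?thesis using that[of "i - j"] canc[of j i] ij by auto
  qed
  have "N \<le> d" unfolding N_def using gen_period[OF a0 gen d(1,3)] .
  then have "d = N" using d by simp
  then show "\<alpha>^(CARD('k) - 1) = 1" using d N_def by simp
  fix i j assume a: "i < CARD('k) - 1" "j < CARD('k) - 1" "\<alpha>^i = \<alpha>^j"
  show "i = j"
  proof (rule ccontr)
    assume "i \<noteq> j"
    then consider "i < j" | "j < i" by arith
    then show False
    proof cases
      case 1
      then have "CARD('k) - 1 \<le> j - i" using gen_period[OF a0 gen _ canc[OF 1 a(3)]] by simp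
      then show False using a 1 by simp
    next
      case 2
      then have "CARD('k) - 1 \<le> i - j" using gen_period[OF a0 gen _ canc[OF 2 a(3)[symmetric]]] by simp
      then show False using a 2 by simp
    qed
  qed
qed

lemma char_from_card:
  assumes "CARD('k::{field,finite}) = 3^k"
  shows "CHAR('k) = 3"
proof -
  have pos: "CHAR('k) > 0" by (rule finite_imp_CHAR_pos) simp
  have pr: "prime CHAR('k)" using prime_CHAR_semidom[OF pos] .
  have "CHAR('k) dvd 3^k" using CHAR_dvd_CARD[where 'a='k] assms by simp
  then have "CHAR('k) dvd 3" using pr prime_dvd_power by blast
  moreover have "prime (3::nat)" by simp
  ultimately have "CHAR('k) = 1 \<or> CHAR('k) = 3" unfolding prime_nat_iff by blast
  then show ?thesis using pr by auto
qed


lemma pow3_lin: "4 \<le> k \<Longrightarrow> 8 * k < (3::nat)^k"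
  by (induction k rule: nat_induct_at_least) auto

context tern
begin

lemma bch_setup:
  fixes \<alpha> :: "'k::{field,finite}"
  assumes card: "CARD('k) = 3 ^ ord n 3" and a0: "\<alpha> \<noteq> 0"
    and gen: "\<forall>x::'k. x \<noteq> 0 \<longrightarrow> (\<exists>i::nat. x = \<alpha> ^ i)"
  shows "bch m n (\<alpha> ^ ((3 ^ ord n 3 - 1) div n))"
proof -
  define N where "N = 3 ^ ord n 3 - (1::nat)"
  have NC: "N = CARD('k) - 1" unfolding N_def card ..
  have "[3^(2*m) = 1] (mod n)" by (rule pow2m)
  then have "n dvd 3^(2*m) - 1" by (simp add: cong_altdef_nat)
  then have dv: "n dvd N" unfolding N_def ord3 .
  define q where "q = N div n"
  have Nq: "N = n * q" unfolding q_def using dv by simp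
  have aN: "\<alpha>^N = 1" unfolding NC using gen_props(1)[OF a0 gen] .
  have ainj: "\<And>i j. i < N \<Longrightarrow> j < N \<Longrightarrow> \<alpha>^i = \<alpha>^j \<Longrightarrow> i = j"
    unfolding NC using gen_props(2)[OF a0 gen] by blast
  have q0: "0 < q"
  proof (rule ccontr)
    assume "\<not> 0 < q"
    then have "N = 0" using Nq by simp
    moreover have "N \<ge> 3^(2*m) - 1" unfolding N_def ord3 by simp
    moreover have "(3::nat)^(2*m) \<ge> 3^1" by (rule power_increasing) (use m5 in auto)
    ultimately show False by simp
  qed
  show ?thesis
  proof unfold_locales
    show "CHAR('k) = 3" using char_from_card[OF card] .
    show "(\<alpha> ^ ((3 ^ ord n 3 - 1) div n)) ^ n = 1"
      using aN Nq unfolding N_def[symmetric] q_def[symmetric] by (simp add: power_mult[symmetric] mult.commute)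
    fix i j assume ij: "i < n" "j < n" "(\<alpha> ^ ((3 ^ ord n 3 - 1) div n)) ^ i = (\<alpha> ^ ((3 ^ ord n 3 - 1) div n)) ^ j"
    have "\<alpha>^(q*i) = \<alpha>^(q*j)" using ij(3) unfolding N_def[symmetric] q_def[symmetric] by (simp add: power_mult)
    moreover have "q * i < N" "q * j < N" using ij(1,2) q0 Nq by (simp_all add: mult.commute)
    ultimately have "q * i = q * j" using ainj by blast
    then show "i = j" using q0 by simp
  qed
qed

end

context bch
begin

lemma C0: "C 0 = {0}" by (simp add: coset_range)

lemma ZS1:
  assumes "d1 - 1 \<le> \<delta>" "\<delta> \<le> d1"
  shows "ZS {1..\<delta>-1} = {1..<n} - C d1"
proof
  show "ZS {1..\<delta>-1} \<subseteq> {1..<n} - C d1"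
  proof
    fix j assume "j \<in> ZS {1..\<delta>-1}"
    then obtain i where i: "1 \<le> i" "i \<le> \<delta> - 1" "j \<in> C i" unfolding ZS_def by auto
    have il: "i < n" using i assms d1_lt by simp
    have j: "0 < j" "j < n" using coset_nz[OF _ il i(3)] i(1) coset_lt[OF i(3)] by auto
    have "j \<notin> C d1" using Zchar[of "\<delta> - 1" j] assms j i d1_ge by auto
    then show "j \<in> {1..<n} - C d1" using j by auto
  qed
next
  show "{1..<n} - C d1 \<subseteq> ZS {1..\<delta>-1}"
  proof
    fix j assume "j \<in> {1..<n} - C d1"
    then have j: "0 < j" "j < n" "j \<notin> C d1" by auto
    have D: "d1 - 2 \<le> \<delta> - 1" "\<delta> - 1 \<le> d1 - 1" using assms d1_ge by auto
    from Zchar[OF D j(1) j(2)] j(3) obtain i where "1 \<le> i" "i \<le> \<delta> - 1" "j \<in> C i" by blast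
    then show "j \<in> ZS {1..\<delta>-1}" unfolding ZS_def by auto
  qed
qed

lemma ZS2: "ZS {0..\<delta>-1} = insert 0 (ZS {1..\<delta>-1})"
proof -
  have "{0..\<delta>-1} = insert 0 {1..\<delta>-1}" by auto
  then show ?thesis unfolding ZS_def using C0 by auto
qed

lemma card_ZS1:
  assumes "d1 - 1 \<le> \<delta>" "\<delta> \<le> d1"
  shows "card (ZS {1..\<delta>-1}) = n - 1 - 2 * m"
proof -
  have sub: "C d1 \<subseteq> {1..<n}" using coset_nz[OF _ d1_lt] coset_lt d1_ge by force
  have "card ({1..<n} - C d1) = card {1..<n} - card (C d1)"
    using sub by (intro card_Diff_subset) (auto intro: finite_subset)
  then show ?thesis unfolding ZS1[OF assms] T4 by simp
qed

lemma card_ZS2: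
  assumes "d1 - 1 \<le> \<delta>" "\<delta> \<le> d1"
  shows "card (ZS {0..\<delta>-1}) = n - 2 * m"
proof -
  have "0 \<notin> ZS {1..\<delta>-1}" unfolding ZS1[OF assms] by auto
  moreover have "finite (ZS {1..\<delta>-1})" unfolding ZS1[OF assms] by simp
  ultimately have "card (ZS {0..\<delta>-1}) = Suc (n - 1 - 2 * m)" unfolding ZS2 using card_ZS1[OF assms] by simp
  moreover have "2 * m < n"
  proof -
    have "8 * m < 3^m" using m5 by (intro pow3_lin) simp
    then show ?thesis using n_d1 d1_eq pm1 p81 by linarith
  qed
  ultimately show ?thesis by simp
qed

lemma negc1:
  assumes "d1 - 1 \<le> \<delta>" "\<delta> \<le> d1"
  shows "\<forall>j\<in>ZS {1..\<delta>-1}. (n - j) mod n \<in> ZS {1..\<delta>-1}"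
proof
  fix j assume "j \<in> ZS {1..\<delta>-1}"
  then have j: "0 < j" "j < n" "j \<notin> C d1" unfolding ZS1[OF assms] by auto
  have "(n - j) mod n = n - j" using j by simp
  moreover have "n - j \<notin> C d1"
  proof
    assume "n - j \<in> C d1"
    then have "n - (n - j) \<in> C d1" using coset_neg[OF _ d1_lt] d1_ge by simp
    then show False using j by simp
  qed
  ultimately show "(n - j) mod n \<in> ZS {1..\<delta>-1}" unfolding ZS1[OF assms] using j by auto
qed

lemma negc2:
  assumes "d1 - 1 \<le> \<delta>" "\<delta> \<le> d1"
  shows "\<forall>j\<in>ZS {0..\<delta>-1}. (n - j) mod n \<in> ZS {0..\<delta>-1}"
  using negc1[OF assms] unfolding ZS2 by auto


lemma two_m_lt: "2 * m < n"
proof -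
  have "8 * m < 3^m" using m5 by (intro pow3_lin) simp
  then show ?thesis using n_d1 d1_eq pm1 p81 by linarith
qed

lemma final_parts:
  assumes d: "d1 - 1 \<le> \<delta>" "\<delta> \<le> d1"
  shows "is_LCD n (bch_code \<beta> n \<delta> 1)" "code_dim (bch_code \<beta> n \<delta> 1) = 2*m+1"
    "min_dist_ge (bch_code \<beta> n \<delta> 1) (d1 - 2)"
    "is_LCD n (bch_code \<beta> n (\<delta>+1) 0)" "code_dim (bch_code \<beta> n (\<delta>+1) 0) = 2*m"
    "min_dist_ge (bch_code \<beta> n (\<delta>+1) 0) (2*(d1-2))"
proof -
  have i1: "1 + \<delta> - 2 = \<delta> - 1" using d d1_ge by simp
  have i2: "0 + (\<delta> + 1) - 2 = \<delta> - 1" using d d1_ge by simp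
  have e1: "bch_code \<beta> n \<delta> 1 = cyclic_code n (gS {1..\<delta>-1})"
    unfolding bch_code_def bch_gen_def gS_def i1 ..
  have e2: "bch_code \<beta> n (\<delta>+1) 0 = cyclic_code n (gS {0..\<delta>-1})"
    unfolding bch_code_def bch_gen_def gS_def i2 ..
  have dl: "\<delta> - 1 < n" using d d1_lt by simp
  have S1: "finite {1..\<delta>-1}" "\<forall>i\<in>{1..\<delta>-1}. i < n" using dl by auto
  have S2: "finite {0..\<delta>-1}" "\<forall>i\<in>{0..\<delta>-1}. i < n" using dl by auto
  show "is_LCD n (bch_code \<beta> n \<delta> 1)" unfolding e1 by (rule lcd[OF S1 negc1[OF d]])
  show "is_LCD n (bch_code \<beta> n (\<delta>+1) 0)" unfolding e2 by (rule lcd[OF S2 negc2[OF d]])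
  show "code_dim (bch_code \<beta> n \<delta> 1) = 2*m+1"
    unfolding e1 code_dim_formula[OF gS_dvd_xn1] gS_degree[OF S1] card_ZS1[OF d] using two_m_lt by simp
  show "code_dim (bch_code \<beta> n (\<delta>+1) 0) = 2*m"
    unfolding e2 code_dim_formula[OF gS_dvd_xn1] gS_degree[OF S2] card_ZS2[OF d] using two_m_lt by simp
  show "min_dist_ge (bch_code \<beta> n \<delta> 1) (d1 - 2)"
    unfolding min_dist_ge_def
  proof (intro ballI impI)
    fix c assume c: "c \<in> bch_code \<beta> n \<delta> 1" "c \<noteq> 0"
    have cc: "c \<in> cyclic_code n (gS {1..\<delta>-1})" using c(1) e1 by simp
    have dc: "degree c < n" using cc code_char[OF gS_dvd_xn1] by blast
    have "\<delta> \<le> hweight c"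
    proof (rule bch_bound[OF c(2) dc, of \<delta> 1])
      show "\<forall>k<\<delta> - 1. poly (M c) (\<beta> ^ (1 + k)) = 0"
      proof (intro allI impI)
        fix k assume k: "k < \<delta> - 1"
        have "1 + k \<in> C (1 + k)" using k dl by (intro coset_self) simp
        then have "1 + k \<in> ZS {1..\<delta>-1}" unfolding ZS_def using k by auto
        then show "poly (M c) (\<beta> ^ (1 + k)) = 0" by (rule code_zero_roots[OF S1 cc])
      qed
    qed
    then show "d1 - 2 \<le> hweight c" using d by simp
  qed
  show "min_dist_ge (bch_code \<beta> n (\<delta>+1) 0) (2*(d1-2))"
    unfolding min_dist_ge_def
  proof (intro ballI impI)
    fix c assume c: "c \<in> bch_code \<beta> n (\<delta>+1) 0" "c \<noteq> 0"
    have cc: "c \<in> cyclic_code n (gS {0..\<delta>-1})" using c(1) e2 by simp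
    have dc: "degree c < n" using cc code_char[OF gS_dvd_xn1] by blast
    define b where "b = n - (\<delta> - 1)"
    have "2 * \<delta> \<le> hweight c"
    proof (rule bch_bound[OF c(2) dc, of "2 * \<delta>" b])
      show "\<forall>k<2 * \<delta> - 1. poly (M c) (\<beta> ^ (b + k)) = 0"
      proof (intro allI impI)
        fix k assume k: "k < 2 * \<delta> - 1"
        have "(b + k) mod n \<in> ZS {0..\<delta>-1}"
        proof (cases "k < \<delta> - 1")
          case True
          define i where "i = \<delta> - 1 - k"
          have i: "1 \<le> i" "i \<le> \<delta> - 1" "i < n" using True dl unfolding i_def by auto
          have bk: "b + k = n - i" unfolding b_def i_def using True dl by simp
          then have "(b + k) mod n = n - i" using i by simp
          moreover have "n - i \<in> C i" using coset_neg[of i i] coset_self[of i] i by simp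
          ultimately show ?thesis unfolding ZS_def using i by auto
        next
          case False
          define i where "i = k - (\<delta> - 1)"
          have i: "i \<le> \<delta> - 1" "i < n" using False k dl unfolding i_def by auto
          have "b + k = n + i" unfolding b_def i_def using False dl by simp
          then have "(b + k) mod n = i" using i by simp
          moreover have "i \<in> C i" using i by (intro coset_self)
          ultimately show ?thesis unfolding ZS_def using i by auto
        qed
        then have "poly (M c) (\<beta> ^ ((b + k) mod n)) = 0" by (rule code_zero_roots[OF S2 cc])
        then show "poly (M c) (\<beta> ^ (b + k)) = 0" using beta_mod[of "b + k"] by simp
      qed
    qed
    then show "2 * (d1 - 2) \<le> hweight c" using d by simp
  qed
qed

end


theorem theorem8:
  fixes \<alpha> :: "'k::{field,finite}" and m t n \<delta> :: nat
  assumes "m = 2 * t + 1" and "m \<ge> 5"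
    and "n = (3 ^ m + 1) div 4"
    and "CARD('k) = 3 ^ ord n 3"
    and "\<alpha> \<noteq> 0" and "\<forall>x::'k. x \<noteq> 0 \<longrightarrow> (\<exists>i::nat. x = \<alpha> ^ i)"
    and "delta_idx 3 2 n + 1 \<le> \<delta>" and "\<delta> \<le> delta_idx 3 1 n"
  shows "let \<beta> = \<alpha> ^ ((3 ^ ord n 3 - 1) div n) in
     is_LCD n (bch_code \<beta> n \<delta> 1) \<and> code_dim (bch_code \<beta> n \<delta> 1) = 2 * m + 1
       \<and> min_dist_ge (bch_code \<beta> n \<delta> 1) (delta_idx 3 2 n)
   \<and> is_LCD n (bch_code \<beta> n (\<delta> + 1) 0) \<and> code_dim (bch_code \<beta> n (\<delta> + 1) 0) = 2 * m
       \<and> min_dist_ge (bch_code \<beta> n (\<delta> + 1) 0) (2 * delta_idx 3 2 n)"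
proof -
  have T: "tern m n"
  proof
    show "odd m" using assms(1) by simp
    show "5 \<le> m" using assms(2) .
    show "n = (3 ^ m + 1) div 4" using assms(3) .
  qed
  interpret tern m n by (rule T)
  define \<beta> where "\<beta> = \<alpha> ^ ((3 ^ ord n 3 - 1) div n)"
  interpret bch m n \<beta> unfolding \<beta>_def by (rule bch_setup[OF assms(4,5,6)])
  have d: "d1 - 1 \<le> \<delta>" "\<delta> \<le> d1" using assms(7,8) delta1 delta2 d1_ge by auto
  show ?thesis unfolding Let_def \<beta>_def[symmetric] delta2
    using final_parts[OF d] by simp
qed

end
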